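(* Let $\Theta\subseteq\mathbb R^d$, $h:\Theta\to\mathbb R^d$ measurable, $\theta_\star\in\Theta$ such that $h$ is twice continuously differentiable in a neighborhood of $\theta_\star$ and $\nabla h(\theta_\star)$ is a Hurwitz matrix, with $-L$ ($L>0$) the largest real part of its eigenvalues. Let $U_\star$ be a positive definite $d\times d$ matrix and $\{\gamma_n\}_{n\ge1}$ a positive sequence with $\sum_k\gamma_k=\infty$, $\sum_k\gamma_k^2<\infty$. Let $\{v_n\}$ be a sequence of $d\times d$ matrices. (a) Suppose $\log(\gamma_{k-1}/\gamma_k)=o(\gamma_k)$ and $$v_{n+1}=v_n+\gamma_nf(v_n)+\frac{\gamma_n-\gamma_{n+1}}{\gamma_{n+1}}v_n+(\gamma_{n+1}-\gamma_n)U_\star+\gamma_n\gamma_{n+1}\nabla h(\theta_\star)v_n\nabla h(\theta_\star)^T,$$ where $f(v)=U_\star+\nabla h(\theta_\star)v+v\nabla h(\theta_\star)^T$. Then there exists a unique positive definite matrix $V$ with $f(V)=0$, and $\lim_nv_n=V$. (b) Suppose there is $\gamma_\star>1/(2L)$ with $\log(\gamma_{k-1}/\gamma_k)\sim\gamma_k/\gamma_\star$, and $$v_{n+1}=v_n+\gamma_nf(v_n)+(\gamma_{n+1}-\gamma_n)U_\star+\gamma_n\gamma_{n+1}\nabla h(\theta_\star)v_n\nabla h(\theta_\star)^T,$$ where $f(v)=U_\star+\nabla h(\theta_\star)v+v\nabla h(\theta_\star)^T+\gamma_\star^{-1}v$. Then there exists a unique positive definite matrix $V$ with $f(V)=0$,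 and $\lim_nv_n=V$.
   Context: A Hurwitz matrix is a square matrix all of whose eigenvalues have negative real part; $x^T$ denotes transpose. *)

theory Defs
  imports "HOL-Analysis.Analysis" "HOL-Library.Landau_Symbols"
begin

definition cmat :: "real^'n^'n \<Rightarrow> complex^'n^'n" where
  "cmat A = (\<chi> i j. complex_of_real (A $ i $ j))"

definition is_eigenvalue :: "real^'n^'n \<Rightarrow> complex \<Rightarrow> bool" where
  "is_eigenvalue A \<mu> \<longleftrightarrow> (\<exists>v. v \<noteq> 0 \<and> cmat A *v v = \<mu> *s v)"

definition hurwitz :: "real^'n^'n \<Rightarrow> bool" where
  "hurwitz A \<longleftrightarrow> (\<forall>\<mu>. is_eigenvalue A \<mu> \<longrightarrow> Re \<mu> < 0)"

definition pos_def :: "real^'n^'n \<Rightarrow> bool" where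
  "pos_def M \<longleftrightarrow> transpose M = M \<and> (\<forall>x. x \<noteq> 0 \<longrightarrow> x \<bullet> (M *v x) > 0)"

definition C2_with_jacobian ::
    "(real^'n) set \<Rightarrow> (real^'n \<Rightarrow> real^'n) \<Rightarrow> (real^'n \<Rightarrow> real^'n^'n) \<Rightarrow> bool" where
  "C2_with_jacobian U h J \<longleftrightarrow>
     (\<forall>x\<in>U. (h has_derivative (\<lambda>v. J x *v v)) (at x)) \<and>
     (\<exists>J'. (\<forall>x\<in>U. (J has_derivative blinfun_apply (J' x)) (at x)) \<and> continuous_on U J')"

end

theory Submission
  imports Defs "Jordan_Normal_Form.Schur_Decomposition"
begin

lemma diag_entry_root:
  fixes M T :: "complex mat"
  assumes cp: "char_poly M = (\<Prod>a\<leftarrow>es. [:- a, 1:])" and dg: "diag_mat T = es"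
    and T: "T \<in> carrier_mat n n" and i: "i < n"
  shows "poly (char_poly M) (T $$ (i,i)) = 0"
proof -
  have "T $$ (i,i) \<in> set es" using dg T i unfolding diag_mat_def by auto
  then show ?thesis unfolding cp poly_prod_list by (induct es) (auto simp: prod_list_zero_iff)
qed

lemma prod_le_of_sq: "(a::real)\<^sup>2 \<le> S \<Longrightarrow> b\<^sup>2 \<le> S \<Longrightarrow> a * b \<le> S"
proof -
  assume "a\<^sup>2 \<le> S" "b\<^sup>2 \<le> S"
  moreover have "a * b \<le> (a\<^sup>2 + b\<^sup>2) / 2" using sum_squares_ge_zero[of "a - b" 0]
    by (simp add: power2_eq_square algebra_simps)
  ultimately show ?thesis by argo
qed

lemma KLJ:
  fixes M :: "complex mat" and a :: real
  assumes M: "M \<in> carrier_mat n n"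
  and eig: "\<forall>e. poly (char_poly M) e = 0 \<longrightarrow> Re e < -a"
  shows "\<exists>R Ri \<kappa>. R \<in> carrier_mat n n \<and> Ri \<in> carrier_mat n n \<and> R * Ri = 1\<^sub>m n \<and> Ri * R = 1\<^sub>m n \<and> \<kappa> > a \<and>
     (\<forall>y \<in> carrier_vec n. Re (\<Sum>i<n. cnj (vec_index y i) * vec_index ((R * M * Ri) *\<^sub>v y) i) \<le> -\<kappa> * (\<Sum>i<n. (cmod (vec_index y i))\<^sup>2))"
proof -
  obtain es where cp: "char_poly M = (\<Prod>a\<leftarrow>es. [:- a, 1:])" using char_poly_factorized[OF M] by auto
  obtain T P Q where sd: "schur_decomposition M es = (T,P,Q)" by (cases "schur_decomposition M es") auto
  from schur_decomposition[OF M cp sd] have sw: "similar_mat_wit M T P Q" and ut: "upper_triangular T"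
    and dg: "diag_mat T = es" by auto
  note sD = similar_mat_witD2[OF M sw]
  have T: "T \<in> carrier_mat n n" and P: "P \<in> carrier_mat n n" and Q: "Q \<in> carrier_mat n n" using sD by auto
  have ReT: "Re (T $$ (i,i)) < -a" if "i < n" for i using eig diag_entry_root[OF cp dg T that] by auto
  define m where "m = Min (insert (a+1) ((\<lambda>i. - Re (T $$ (i,i))) ` {..<n}))"
  have ma: "m > a" unfolding m_def using ReT by (subst Min_gr_iff) (auto simp: less_minus_iff)
  have mle: "m \<le> - Re (T $$ (i,i))" if "i < n" for i unfolding m_def using that by (intro Min_le) auto
  define K where "K = (\<Sum>i<n. \<Sum>j<n. cmod (T $$ (i,j)))"
  have K0: "K \<ge> 0" unfolding K_def by (intro sum_nonneg) auto
  define \<epsilon> where "\<epsilon> = min 1 ((m - a) / (2 * (K + 1)))"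
  have e0: "\<epsilon> > 0" and e1: "\<epsilon> \<le> 1" using ma K0 unfolding \<epsilon>_def by auto
  have eK: "\<epsilon> * K \<le> (m - a) / 2"
  proof -
    have "\<epsilon> * K \<le> ((m - a) / (2 * (K + 1))) * K" using K0 unfolding \<epsilon>_def by (intro mult_right_mono) auto
    also have "\<dots> \<le> (m - a) / 2" using K0 ma by (simp add: field_simps)
    finally show ?thesis .
  qed
  define D where "D = mat_diag n (\<lambda>i. complex_of_real (\<epsilon> ^ i))"
  define Di where "Di = mat_diag n (\<lambda>i. complex_of_real (inverse \<epsilon> ^ i))"
  have DDi: "D * Di = 1\<^sub>m n" "Di * D = 1\<^sub>m n" unfolding D_def Di_def using e0
    by (auto simp flip: of_real_mult power_mult_distrib)
  have D: "D \<in> carrier_mat n n" and Di: "Di \<in> carrier_mat n n" unfolding D_def Di_def by auto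
  define R where "R = Di * Q"
  define Ri where "Ri = P * D"
  have R: "R \<in> carrier_mat n n" and Ri: "Ri \<in> carrier_mat n n" unfolding R_def Ri_def using D Di P Q by auto
  have PQ: "P * Q = 1\<^sub>m n" "Q * P = 1\<^sub>m n" and MPTQ: "M = P * T * Q" using sD by auto
  have RRi: "R * Ri = 1\<^sub>m n"
  proof -
    have "R * Ri = Di * (Q * P) * D" unfolding R_def Ri_def using D Di P Q
      by (simp add: assoc_mult_mat[of _ n n _ n _ n])
    also have "\<dots> = 1\<^sub>m n" using PQ DDi Di by simp
    finally show ?thesis .
  qed
  have RiR: "Ri * R = 1\<^sub>m n"
  proof -
    have "Ri * R = P * (D * Di) * Q" unfolding R_def Ri_def using D Di P Q
      by (simp add: assoc_mult_mat[of _ n n _ n _ n])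
    also have "\<dots> = 1\<^sub>m n" using PQ DDi P by simp
    finally show ?thesis .
  qed
  define T' where "T' = Matrix.mat n n (\<lambda>(i,j). complex_of_real (inverse \<epsilon> ^ i) * T $$ (i,j) * complex_of_real (\<epsilon> ^ j))"
  have RMRi: "R * M * Ri = T'"
  proof -
    have "R * M * Ri = Di * (Q * P) * T * (Q * P) * D" unfolding R_def Ri_def MPTQ using D Di P Q T
      by (simp add: assoc_mult_mat[of _ n n _ n _ n])
    also have "\<dots> = Di * T * D" using PQ T Di by simp
    also have "\<dots> = T'" unfolding Di_def D_def T'_def
      by (subst mat_diag_mult_left[of _ n n], use T in simp, subst mat_diag_mult_right[of _ n n], auto)
    finally show ?thesis .
  qed
  show ?thesis
  proof (intro exI conjI ballI)
    show "(m + a) / 2 > a" using ma by simp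
    fix y :: "complex vec" assume y: "y \<in> carrier_vec n"
    define S where "S = (\<Sum>i<n. (cmod (vec_index y i))\<^sup>2)"
    have yS: "cmod (vec_index y i) * cmod (vec_index y j) \<le> S" if "i < n" "j < n" for i j
    proof -
      have "(cmod (vec_index y i))\<^sup>2 \<le> S" "(cmod (vec_index y j))\<^sup>2 \<le> S" unfolding S_def using that
        by (auto intro!: member_le_sum)
      then show ?thesis by (rule prod_le_of_sq)
    qed
    have vec: "vec_index (T' *\<^sub>v y) i = (\<Sum>j<n. T' $$ (i,j) * vec_index y j)" if "i < n" for i
      using that y unfolding T'_def by (auto simp: scalar_prod_def lessThan_atLeast0 intro!: sum.cong)
    have bound: "Re (cnj (vec_index y i) * (T' $$ (i,j) * vec_index y j)) \<le>
        (if i = j then -m * (cmod (vec_index y i))\<^sup>2 else \<epsilon> * cmod (T $$ (i,j)) * S)" if ij: "i < n" "j < n" for i j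
    proof (cases "i = j")
      case True
      have "T' $$ (i,j) = T $$ (i,i)" using True ij e0 unfolding T'_def
        by (simp flip: of_real_mult power_mult_distrib add: mult.commute)
      then have "Re (cnj (vec_index y i) * (T' $$ (i,j) * vec_index y j)) = Re (T $$ (i,i)) * (cmod (vec_index y i))\<^sup>2"
        using True by (simp add: cmod_power2 algebra_simps) (simp add: power2_eq_square algebra_simps)
      also have "\<dots> \<le> -m * (cmod (vec_index y i))\<^sup>2" using mle[OF ij(1)] by (intro mult_right_mono) auto
      finally show ?thesis using True by simp
    next
      case False
      show ?thesis
      proof (cases "j < i")
        case True
        then have "T $$ (i,j) = 0" using ut T ij unfolding upper_triangular_def by auto
        then show ?thesis using False ij unfolding T'_def by simp
      next
        case ji: False
        then have ij2: "i < j" using False by simp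
        have eps: "inverse \<epsilon> ^ i * \<epsilon> ^ j \<le> \<epsilon>"
        proof -
          have "inverse \<epsilon> ^ i * \<epsilon> ^ j = \<epsilon> ^ (j - i)" using ij2 e0
            by (simp add: power_diff field_simps power_inverse)
          also have "\<dots> \<le> \<epsilon> ^ 1" using ij2 e0 e1 by (intro power_decreasing) auto
          finally show ?thesis by simp
        qed
        have "Re (cnj (vec_index y i) * (T' $$ (i,j) * vec_index y j)) \<le> cmod (cnj (vec_index y i) * (T' $$ (i,j) * vec_index y j))"
          by (rule complex_Re_le_cmod)
        also have "\<dots> = (inverse \<epsilon> ^ i * \<epsilon> ^ j) * cmod (T $$ (i,j)) * (cmod (vec_index y i) * cmod (vec_index y j))"
          using ij e0 unfolding T'_def by (simp add: norm_mult norm_power norm_inverse)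
        also have "\<dots> \<le> \<epsilon> * cmod (T $$ (i,j)) * S"
          using eps yS[OF ij] e0 by (intro mult_mono) auto
        finally show ?thesis using False by simp
      qed
    qed
    have "Re (\<Sum>i<n. cnj (vec_index y i) * vec_index ((R * M * Ri) *\<^sub>v y) i)
        = (\<Sum>i<n. \<Sum>j<n. Re (cnj (vec_index y i) * (T' $$ (i,j) * vec_index y j)))"
      unfolding RMRi by (simp add: vec sum_distrib_left Re_sum)
    also have "\<dots> \<le> (\<Sum>i<n. \<Sum>j<n. (if i = j then -m * (cmod (vec_index y i))\<^sup>2 else \<epsilon> * cmod (T $$ (i,j)) * S))"
      using bound by (intro sum_mono) auto
    also have "\<dots> \<le> (\<Sum>i<n. -m * (cmod (vec_index y i))\<^sup>2 + (\<Sum>j<n. \<epsilon> * cmod (T $$ (i,j)) * S))"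
    proof (intro sum_mono)
      fix i assume i: "i \<in> {..<n}"
      have "(\<Sum>j<n. (if i = j then -m * (cmod (vec_index y i))\<^sup>2 else \<epsilon> * cmod (T $$ (i,j)) * S))
          = (\<Sum>j<n. (if i = j then -m * (cmod (vec_index y i))\<^sup>2 else 0)) + (\<Sum>j<n. (if i = j then 0 else \<epsilon> * cmod (T $$ (i,j)) * S))"
        by (rule trans[OF sum.cong sum.distrib]) auto
      also have "\<dots> \<le> -m * (cmod (vec_index y i))\<^sup>2 + (\<Sum>j<n. \<epsilon> * cmod (T $$ (i,j)) * S)"
      proof -
        have "(\<Sum>j<n. (if i = j then -m * (cmod (vec_index y i))\<^sup>2 else 0)) = -m * (cmod (vec_index y i))\<^sup>2"
          using i by simp
        moreover have "(\<Sum>j<n. (if i = j then 0 else \<epsilon> * cmod (T $$ (i,j)) * S)) \<le> (\<Sum>j<n. \<epsilon> * cmod (T $$ (i,j)) * S)"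
          using e0 by (intro sum_mono) (auto simp: S_def intro!: sum_nonneg mult_nonneg_nonneg)
        ultimately show ?thesis by linarith
      qed
      finally show "(\<Sum>j<n. (if i = j then -m * (cmod (vec_index y i))\<^sup>2 else \<epsilon> * cmod (T $$ (i,j)) * S))
          \<le> -m * (cmod (vec_index y i))\<^sup>2 + (\<Sum>j<n. \<epsilon> * cmod (T $$ (i,j)) * S)" .
    qed
    also have "\<dots> = -m * S + \<epsilon> * K * S"
    proof -
      have 1: "(\<Sum>i<n. -m * (cmod (vec_index y i))\<^sup>2) = -m * S" unfolding S_def by (simp add: sum_distrib_left)
      have 2: "(\<Sum>i<n. \<Sum>j<n. \<epsilon> * cmod (T $$ (i,j)) * S) = \<epsilon> * K * S" unfolding K_def
        by (simp add: sum_distrib_left sum_distrib_right mult.assoc)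
      show ?thesis unfolding sum.distrib 1 2 ..
    qed
    also have "\<dots> \<le> -m * S + (m - a) / 2 * S"
      using eK by (intro add_left_mono mult_right_mono) (auto simp: S_def intro: sum_nonneg)
    also have "\<dots> = - ((m + a) / 2) * S" by (simp add: field_simps)
    finally show "Re (\<Sum>i<n. cnj (vec_index y i) * vec_index ((R * M * Ri) *\<^sub>v y) i) \<le> - ((m + a) / 2) * (\<Sum>i<n. (cmod (vec_index y i))\<^sup>2)"
      unfolding S_def .
  qed (use R Ri RRi RiR in auto)
qed

no_notation vec_index (infixl "$" 100)

context
  fixes f :: "nat \<Rightarrow> 'n::finite"
  assumes bf: "bij_betw f {..<CARD('n)} UNIV"
begin

definition gi :: "'n \<Rightarrow> nat" where "gi = inv_into {..<CARD('n)} f"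

lemma gi_lt: "gi k < CARD('n)"
  unfolding gi_def using bf by (metis bij_betw_def inv_into_into lessThan_iff UNIV_I)

lemma f_gi[simp]: "f (gi k) = k"
  unfolding gi_def using bf by (meson UNIV_I bij_betw_inv_into_right)

lemma gi_f[simp]: "i < CARD('n) \<Longrightarrow> gi (f i) = i"
  unfolding gi_def using bf by (simp add: bij_betw_inv_into_left)

lemma gi_inj: "gi k = gi l \<longleftrightarrow> k = l"
  by (metis f_gi)

lemma sum_reidx: "(\<Sum>k\<in>UNIV. F k) = (\<Sum>i<CARD('n). F (f i))"
  using sum.reindex_bij_betw[OF bf, of F] by simp

definition toM :: "complex^'n^'n \<Rightarrow> complex mat" where
  "toM X = Matrix.mat CARD('n) CARD('n) (\<lambda>(i,j). X $ f i $ f j)"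
definition fromM :: "complex mat \<Rightarrow> complex^'n^'n" where
  "fromM A = (\<chi> i j. A $$ (gi i, gi j))"
definition toV :: "complex^'n \<Rightarrow> complex Matrix.vec" where
  "toV y = Matrix.vec CARD('n) (\<lambda>i. y $ f i)"

lemma toM_carrier: "toM X \<in> carrier_mat CARD('n) CARD('n)" unfolding toM_def by auto
lemma toV_carrier: "toV y \<in> carrier_vec CARD('n)" unfolding toV_def by auto

lemma fromM_toM: "fromM (toM X) = X"
  unfolding fromM_def toM_def by (simp add: Finite_Cartesian_Product.vec_eq_iff gi_lt)

lemma fromM_mult:
  assumes "A \<in> carrier_mat CARD('n) CARD('n)" "B \<in> carrier_mat CARD('n) CARD('n)"
  shows "fromM A ** fromM B = fromM (A * B)"
proof -
  have "(fromM A ** fromM B) $ k $ l = fromM (A * B) $ k $ l" for k l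
  proof -
    have "(fromM A ** fromM B) $ k $ l = (\<Sum>m\<in>UNIV. A $$ (gi k, gi m) * B $$ (gi m, gi l))"
      unfolding fromM_def matrix_matrix_mult_def by simp
    also have "\<dots> = (\<Sum>j<CARD('n). A $$ (gi k, j) * B $$ (j, gi l))"
      by (subst sum_reidx) (auto intro!: sum.cong)
    also have "\<dots> = (A * B) $$ (gi k, gi l)"
      using assms gi_lt by (auto simp: scalar_prod_def lessThan_atLeast0 intro!: sum.cong)
    finally show ?thesis unfolding fromM_def by simp
  qed
  then show ?thesis by (intro iffD2[OF Finite_Cartesian_Product.vec_eq_iff] allI) simp
qed

lemma fromM_one: "fromM (1\<^sub>m CARD('n)) = Finite_Cartesian_Product.mat 1"
  unfolding fromM_def by (simp add: Finite_Cartesian_Product.vec_eq_iff Finite_Cartesian_Product.mat_def gi_lt gi_inj)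

lemma fromM_mult_vec:
  assumes "A \<in> carrier_mat CARD('n) CARD('n)"
  shows "(fromM A *v y) $ k = vec_index (A *\<^sub>v toV y) (gi k)"
proof -
  have "(fromM A *v y) $ k = (\<Sum>m\<in>UNIV. A $$ (gi k, gi m) * y $ m)"
    unfolding fromM_def matrix_vector_mult_def by simp
  also have "\<dots> = (\<Sum>j<CARD('n). A $$ (gi k, j) * y $ f j)"
    by (subst sum_reidx) (auto intro!: sum.cong)
  also have "\<dots> = vec_index (A *\<^sub>v toV y) (gi k)"
    using assms gi_lt by (auto simp: scalar_prod_def toV_def lessThan_atLeast0 intro!: sum.cong)
  finally show ?thesis .
qed

lemma eig_transfer:
  fixes B :: "real^'n^'n"
  assumes "poly (char_poly (toM (cmat B))) e = 0"
  shows "is_eigenvalue B e"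
proof -
  have "eigenvalue (toM (cmat B)) e" using assms eigenvalue_root_char_poly[OF toM_carrier] by simp
  then obtain v where v: "v \<in> carrier_vec CARD('n)" "v \<noteq> 0\<^sub>v CARD('n)"
    and ev: "toM (cmat B) *\<^sub>v v = e \<cdot>\<^sub>v v"
    unfolding eigenvalue_def eigenvector_def by (auto simp: carrier_matD[OF toM_carrier])
  define w :: "complex^'n" where "w = (\<chi> k. vec_index v (gi k))"
  have "cmat B *v w = e *s w"
  proof -
    have "(cmat B *v w) $ k = (e *s w) $ k" for k
    proof -
      have "(cmat B *v w) $ k = (\<Sum>j<CARD('n). cmat B $ k $ f j * vec_index v j)"
        unfolding matrix_vector_mult_def w_def by (subst sum_reidx) simp
      also have "\<dots> = vec_index (toM (cmat B) *\<^sub>v v) (gi k)"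
        using v gi_lt by (auto simp: toM_def scalar_prod_def lessThan_atLeast0 intro!: sum.cong)
      also have "\<dots> = e * vec_index v (gi k)" unfolding ev using v gi_lt by simp
      finally show ?thesis unfolding w_def by simp
    qed
    then show ?thesis by (intro iffD2[OF Finite_Cartesian_Product.vec_eq_iff] allI) simp
  qed
  moreover have "w \<noteq> 0"
  proof
    assume "w = 0"
    then have "vec_index v i = 0" if "i < CARD('n)" for i
      using that unfolding w_def by (metis gi_f vec_lambda_beta zero_index)
    then have "v = 0\<^sub>v CARD('n)" using v by (intro eq_vecI) auto
    then show False using v by simp
  qed
  ultimately show ?thesis unfolding is_eigenvalue_def by blast
qed

lemma KL_aux:
  fixes B :: "real^'n^'n"
  assumes eig: "\<forall>\<mu>. is_eigenvalue B \<mu> \<longrightarrow> Re \<mu> < -a"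
  shows "\<exists>R Ri :: complex^'n^'n. \<exists>\<kappa>>a. R ** Ri = Finite_Cartesian_Product.mat 1 \<and> Ri ** R = Finite_Cartesian_Product.mat 1 \<and>
     (\<forall>y. Re (\<Sum>i\<in>UNIV. cnj (y$i) * ((R ** cmat B ** Ri) *v y) $ i) \<le> -\<kappa> * (\<Sum>i\<in>UNIV. (cmod (y$i))\<^sup>2))"
proof -
  let ?M = "toM (cmat B)"
  from KLJ[OF toM_carrier[of "cmat B"], where a=a] eig_transfer eig
  obtain R Ri \<kappa> where R: "R \<in> carrier_mat CARD('n) CARD('n)" and Ri: "Ri \<in> carrier_mat CARD('n) CARD('n)"
    and RRi: "R * Ri = 1\<^sub>m CARD('n)" and RiR: "Ri * R = 1\<^sub>m CARD('n)" and ka: "\<kappa> > a"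
    and q: "\<forall>y\<in>carrier_vec CARD('n). Re (\<Sum>i<CARD('n). cnj (vec_index y i) * vec_index ((R * ?M * Ri) *\<^sub>v y) i)
         \<le> - \<kappa> * (\<Sum>i<CARD('n). (cmod (vec_index y i))\<^sup>2)"
    by blast
  have M: "?M \<in> carrier_mat CARD('n) CARD('n)" by (rule toM_carrier)
  have eq: "fromM R ** cmat B ** fromM Ri = fromM (R * ?M * Ri)"
    using R Ri M by (simp add: fromM_mult[symmetric] fromM_toM matrix_mul_assoc)
  show ?thesis
  proof (intro exI conjI allI)
    show "fromM R ** fromM Ri = Finite_Cartesian_Product.mat 1" using R Ri RRi by (simp add: fromM_mult fromM_one)
    show "fromM Ri ** fromM R = Finite_Cartesian_Product.mat 1" using R Ri RiR by (simp add: fromM_mult fromM_one)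
    show "\<kappa> > a" by fact
    fix y :: "complex^'n"
    have C: "R * ?M * Ri \<in> carrier_mat CARD('n) CARD('n)" using R Ri M by auto
    have "(\<Sum>i\<in>UNIV. cnj (y$i) * ((fromM R ** cmat B ** fromM Ri) *v y) $ i)
        = (\<Sum>i<CARD('n). cnj (vec_index (toV y) i) * vec_index ((R * ?M * Ri) *\<^sub>v toV y) i)"
      unfolding eq fromM_mult_vec[OF C] by (subst sum_reidx) (simp add: toV_def)
    moreover have "(\<Sum>i\<in>UNIV. (cmod (y$i))\<^sup>2) = (\<Sum>i<CARD('n). (cmod (vec_index (toV y) i))\<^sup>2)"
      by (subst sum_reidx) (simp add: toV_def)
    ultimately show "Re (\<Sum>i\<in>UNIV. cnj (y$i) * ((fromM R ** cmat B ** fromM Ri) *v y) $ i)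
        \<le> - \<kappa> * (\<Sum>i\<in>UNIV. (cmod (y$i))\<^sup>2)" using q toV_carrier by simp
  qed
qed

lemma eig_transfer_conv:
  fixes B :: "real^'n^'n"
  assumes "is_eigenvalue B e"
  shows "poly (char_poly (toM (cmat B))) e = 0"
proof -
  obtain w where w: "w \<noteq> 0" "cmat B *v w = e *s w" using assms unfolding is_eigenvalue_def by blast
  define v where "v = toV w"
  have v: "v \<in> carrier_vec CARD('n)" unfolding v_def by (rule toV_carrier)
  have "toM (cmat B) *\<^sub>v v = e \<cdot>\<^sub>v v"
  proof (rule eq_vecI)
    fix i assume i: "i < dim_vec (e \<cdot>\<^sub>v v)"
    then have i': "i < CARD('n)" using v by simp
    have "vec_index (toM (cmat B) *\<^sub>v v) i = (\<Sum>j<CARD('n). cmat B $ f i $ f j * w $ f j)"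
      using i' v by (auto simp: toM_def v_def toV_def scalar_prod_def lessThan_atLeast0 intro!: sum.cong)
    also have "\<dots> = (cmat B *v w) $ f i"
      unfolding matrix_vector_mult_def by (subst sum_reidx) simp
    also have "\<dots> = e * w $ f i" using w by simp
    finally show "vec_index (toM (cmat B) *\<^sub>v v) i = vec_index (e \<cdot>\<^sub>v v) i"
      using i' v by (simp add: v_def toV_def)
  qed (use v in \<open>auto simp: toM_def\<close>)
  moreover have "v \<noteq> 0\<^sub>v CARD('n)"
  proof
    assume v0: "v = 0\<^sub>v CARD('n)"
    have "w $ k = 0" for k
    proof -
      have "w $ k = vec_index v (gi k)" unfolding v_def toV_def using gi_lt by simp
      also have "\<dots> = 0" using v0 gi_lt by simp
      finally show ?thesis .
    qed
    then have "w = 0" by (simp add: Finite_Cartesian_Product.vec_eq_iff)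
    with w show False by simp
  qed
  ultimately have "eigenvalue (toM (cmat B)) e"
    unfolding eigenvalue_def eigenvector_def using v by (auto simp: carrier_matD[OF toM_carrier])
  then show ?thesis using eigenvalue_root_char_poly[OF toM_carrier] by simp
qed

lemma eig_transpose_aux:
  fixes B :: "real^'n^'n"
  assumes "is_eigenvalue (transpose B) e"
  shows "is_eigenvalue B e"
proof -
  have "toM (cmat (transpose B)) = transpose_mat (toM (cmat B))"
    by (rule eq_matI) (auto simp: toM_def transpose_def cmat_def)
  then have "poly (char_poly (toM (cmat B))) e = 0"
    using eig_transfer_conv[OF assms] char_poly_transpose_mat[OF toM_carrier] by simp
  then show ?thesis by (rule eig_transfer)
qed

end

lemma eig_transpose:
  fixes B :: "real^'n::finite^'n"
  assumes "is_eigenvalue (transpose B) e"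
  shows "is_eigenvalue B e"
proof -
  obtain f :: "nat \<Rightarrow> 'n" where "bij_betw f {..<CARD('n)} UNIV"
    using ex_bij_betw_nat_finite[of "UNIV :: 'n set"] by (auto simp: lessThan_atLeast0)
  from eig_transpose_aux[OF this assms] show ?thesis .
qed

lemma KL:
  fixes B :: "real^'n::finite^'n"
  assumes eig: "\<forall>\<mu>. is_eigenvalue B \<mu> \<longrightarrow> Re \<mu> < -a"
  shows "\<exists>R Ri :: complex^'n^'n. \<exists>\<kappa>>a. R ** Ri = Finite_Cartesian_Product.mat 1 \<and> Ri ** R = Finite_Cartesian_Product.mat 1 \<and>
     (\<forall>y. Re (\<Sum>i\<in>UNIV. cnj (y$i) * ((R ** cmat B ** Ri) *v y) $ i) \<le> -\<kappa> * (\<Sum>i\<in>UNIV. (cmod (y$i))\<^sup>2))"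
proof -
  obtain f :: "nat \<Rightarrow> 'n" where "bij_betw f {..<CARD('n)} UNIV"
    using ex_bij_betw_nat_finite[of "UNIV :: 'n set"] by (auto simp: lessThan_atLeast0)
  from KL_aux[OF this eig] show ?thesis .
qed

definition Hm :: "complex^'n^'n \<Rightarrow> complex^'n^'n" where
  "Hm Z = (\<chi> i j. cnj (Z $ j $ i))"

lemma cinner_eq: "(z::complex) \<bullet> w = Re (cnj z * w)"
  by (simp add: inner_complex_def)

lemma cmat_nth[simp]: "cmat X $ i $ j = complex_of_real (X $ i $ j)"
  by (simp add: cmat_def)

lemma cmat_mult: "cmat (X ** Y) = cmat X ** cmat Y"
  by (simp add: Finite_Cartesian_Product.vec_eq_iff matrix_matrix_mult_def)

lemma cmat_add: "cmat (X + Y) = cmat X + cmat Y"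
  by (simp add: Finite_Cartesian_Product.vec_eq_iff)

lemma cmat_scaleR: "cmat (r *\<^sub>R X) = r *\<^sub>R cmat X"
  by (simp add: Finite_Cartesian_Product.vec_eq_iff complex_eq_iff)

lemma cmat_zero_iff: "cmat X = 0 \<longleftrightarrow> X = 0"
  by (simp add: Finite_Cartesian_Product.vec_eq_iff)

lemma cmat_transpose: "cmat (transpose X) = Hm (cmat X)"
  by (simp add: Finite_Cartesian_Product.vec_eq_iff Hm_def transpose_def)

lemma Hm_mult: "Hm (X ** Y) = Hm Y ** Hm X"
  by (simp add: Finite_Cartesian_Product.vec_eq_iff Hm_def matrix_matrix_mult_def cnj_sum mult.commute)

lemma Hm_one: "Hm (Finite_Cartesian_Product.mat 1) = Finite_Cartesian_Product.mat 1"
  by (simp add: Finite_Cartesian_Product.vec_eq_iff Hm_def Finite_Cartesian_Product.mat_def)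

lemma inner_mat: "(Z::complex^'n^'n) \<bullet> W = (\<Sum>i\<in>UNIV. \<Sum>j\<in>UNIV. Re (cnj (Z $ i $ j) * W $ i $ j))"
  by (simp add: inner_vec_def cinner_eq)

lemma normsq_mat: "(norm (Z::complex^'n^'n))\<^sup>2 = (\<Sum>i\<in>UNIV. \<Sum>j\<in>UNIV. (cmod (Z $ i $ j))\<^sup>2)"
  by (simp add: power2_norm_eq_inner inner_vec_def)

lemma frob_left:
  fixes C Z :: "complex^'n^'n"
  assumes q: "\<forall>y. Re (\<Sum>i\<in>UNIV. cnj (y$i) * (C *v y) $ i) \<le> -\<kappa> * (\<Sum>i\<in>UNIV. (cmod (y$i))\<^sup>2)"
  shows "Z \<bullet> (C ** Z) \<le> -\<kappa> * (norm Z)\<^sup>2"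
proof -
  define y where "y j = (\<chi> i. Z $ i $ j)" for j
  have "Z \<bullet> (C ** Z) = (\<Sum>j\<in>UNIV. \<Sum>i\<in>UNIV. Re (cnj (Z $ i $ j) * (C ** Z) $ i $ j))"
    unfolding inner_mat by (rule sum.swap)
  also have "\<dots> = (\<Sum>j\<in>UNIV. Re (\<Sum>i\<in>UNIV. cnj (y j $ i) * (C *v y j) $ i))"
    by (simp add: Re_sum y_def matrix_matrix_mult_def matrix_vector_mult_def)
  also have "\<dots> \<le> (\<Sum>j\<in>UNIV. -\<kappa> * (\<Sum>i\<in>UNIV. (cmod (y j $ i))\<^sup>2))"
    using q by (intro sum_mono) auto
  also have "\<dots> = -\<kappa> * (norm Z)\<^sup>2"
    unfolding normsq_mat y_def by (subst sum.swap) (simp add: sum_distrib_left)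
  finally show ?thesis .
qed

lemma frob_right:
  fixes C Z :: "complex^'n^'n"
  assumes q: "\<forall>y. Re (\<Sum>i\<in>UNIV. cnj (y$i) * (C *v y) $ i) \<le> -\<kappa> * (\<Sum>i\<in>UNIV. (cmod (y$i))\<^sup>2)"
  shows "Z \<bullet> (Z ** Hm C) \<le> -\<kappa> * (norm Z)\<^sup>2"
proof -
  define u where "u i = (\<chi> k. cnj (Z $ i $ k))" for i
  have tm: "Re (cnj (Z $ i $ j) * (Z ** Hm C) $ i $ j) = Re (cnj (u i $ j) * (C *v u i) $ j)" for i j
  proof -
    have "(Z ** Hm C) $ i $ j = cnj ((C *v u i) $ j)"
      by (simp add: u_def Hm_def matrix_matrix_mult_def matrix_vector_mult_def cnj_sum mult.commute)
    then show ?thesis by (simp add: u_def)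
  qed
  have "Z \<bullet> (Z ** Hm C) = (\<Sum>i\<in>UNIV. Re (\<Sum>j\<in>UNIV. cnj (u i $ j) * (C *v u i) $ j))"
    unfolding inner_mat tm by (simp add: Re_sum)
  also have "\<dots> \<le> (\<Sum>i\<in>UNIV. -\<kappa> * (\<Sum>j\<in>UNIV. (cmod (u i $ j))\<^sup>2))"
    using q by (intro sum_mono) auto
  also have "\<dots> = -\<kappa> * (norm Z)\<^sup>2"
    unfolding normsq_mat u_def by (simp add: sum_distrib_left)
  finally show ?thesis .
qed

lemma ACL:
  fixes \<Phi> :: "'a::euclidean_space \<Rightarrow> 'b::real_inner" and M :: "'a \<Rightarrow> 'a"
  assumes lP: "linear \<Phi>" and lM: "linear M" and m: "m > 0" and mb: "\<forall>x. m * norm x \<le> norm (\<Phi> x)"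
    and neg: "\<forall>x. \<Phi> x \<bullet> \<Phi> (M x) \<le> - r * (norm (\<Phi> x))\<^sup>2" and r: "r > 0"
  shows "\<exists>t0>0. \<exists>\<rho>>0. \<forall>t x. 0 < t \<and> t \<le> t0 \<longrightarrow> norm (\<Phi> (x + t *\<^sub>R M x)) \<le> (1 - \<rho> * t) * norm (\<Phi> x)"
proof -
  obtain BP where BP: "BP > 0" "\<And>x. norm (\<Phi> x) \<le> BP * norm x" using linear_bounded_pos[OF lP] by blast
  obtain BM where BM: "BM > 0" "\<And>x. norm (M x) \<le> BM * norm x" using linear_bounded_pos[OF lM] by blast
  define K where "K = BP * BM / m"
  have K0: "K \<ge> 0" using BP BM m unfolding K_def by simp
  have KM: "norm (\<Phi> (M x)) \<le> K * norm (\<Phi> x)" for x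
  proof -
    have "norm (\<Phi> (M x)) \<le> BP * (BM * norm x)" using BP(2)[of "M x"] BM(2)[of x] BP(1)
      by (meson mult_left_mono less_imp_le order_trans)
    moreover have "norm x \<le> norm (\<Phi> x) / m" using mb m by (simp add: field_simps mult.commute)
    then have "BP * (BM * norm x) \<le> BP * (BM * (norm (\<Phi> x) / m))" using BP(1) BM(1)
      by (intro mult_left_mono) auto
    ultimately have "norm (\<Phi> (M x)) \<le> BP * (BM * (norm (\<Phi> x) / m))" by linarith
    then show ?thesis unfolding K_def by (simp add: field_simps)
  qed
  define t0 where "t0 = min (r / (K\<^sup>2 + 1)) (1 / r)"
  have "K\<^sup>2 + 1 > 0" by (simp add: add_nonneg_pos)
  then have "r / (K\<^sup>2 + 1) > 0" using r by (intro divide_pos_pos)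
  then have t0: "t0 > 0" using r unfolding t0_def by simp
  show ?thesis
  proof (rule exI[of _ t0], intro conjI t0, rule exI[of _ "r/2"], intro conjI allI impI)
    show "r / 2 > 0" using r by auto
    fix t x assume t: "0 < t \<and> t \<le> t0"
    define N where "N = norm (\<Phi> x)"
    have N0: "N \<ge> 0" unfolding N_def by simp
    have tK: "t * K\<^sup>2 \<le> r"
    proof -
      have "t * K\<^sup>2 \<le> (r / (K\<^sup>2 + 1)) * K\<^sup>2" using t unfolding t0_def by (intro mult_right_mono) auto
      also have "\<dots> = r * (K\<^sup>2 / (K\<^sup>2 + 1))" by simp
      also have "\<dots> \<le> r"
      proof (rule mult_left_le)
        have "K\<^sup>2 + 1 > 0" by (simp add: add_nonneg_pos)
        then show "K\<^sup>2 / (K\<^sup>2 + 1) \<le> 1" by (simp add: divide_le_eq_1)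
      qed (use r in auto)
      finally show ?thesis .
    qed
    have tr: "r * t \<le> 1" using t r unfolding t0_def by (simp add: field_simps)
    have eq: "\<Phi> (x + t *\<^sub>R M x) = \<Phi> x + t *\<^sub>R \<Phi> (M x)" using lP by (simp add: linear_add linear_scale)
    have "(norm (\<Phi> (x + t *\<^sub>R M x)))\<^sup>2 = N\<^sup>2 + 2 * t * (\<Phi> x \<bullet> \<Phi> (M x)) + t\<^sup>2 * (norm (\<Phi> (M x)))\<^sup>2"
      unfolding eq N_def power2_norm_eq_inner
      by (simp add: inner_add_left inner_add_right inner_commute power2_eq_square algebra_simps)
    also have "\<dots> \<le> N\<^sup>2 + 2 * t * (- r * N\<^sup>2) + t\<^sup>2 * (K * N)\<^sup>2"
    proof -
      have "2 * t * (\<Phi> x \<bullet> \<Phi> (M x)) \<le> 2 * t * (- r * N\<^sup>2)" using neg t unfolding N_def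
        by (intro mult_left_mono) auto
      moreover have "t\<^sup>2 * (norm (\<Phi> (M x)))\<^sup>2 \<le> t\<^sup>2 * (K * N)\<^sup>2" unfolding N_def
        using KM[of x] by (intro mult_left_mono power_mono) auto
      ultimately show ?thesis by linarith
    qed
    also have "\<dots> = N\<^sup>2 * (1 - 2 * r * t + t * (t * K\<^sup>2))" by (simp add: power2_eq_square algebra_simps)
    also have "\<dots> \<le> N\<^sup>2 * (1 - 2 * r * t + t * r)" using tK t by (intro mult_left_mono add_left_mono) auto
    also have "\<dots> \<le> N\<^sup>2 * (1 - r / 2 * t)\<^sup>2" using r t by (intro mult_left_mono) (auto simp: power2_eq_square algebra_simps)
    also have "\<dots> = ((1 - r / 2 * t) * N)\<^sup>2" by (simp add: power2_eq_square algebra_simps)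
    finally have "(norm (\<Phi> (x + t *\<^sub>R M x)))\<^sup>2 \<le> ((1 - r / 2 * t) * N)\<^sup>2" .
    moreover have "(1 - r / 2 * t) * N \<ge> 0" using tr N0 t r by (intro mult_nonneg_nonneg) auto
    ultimately show "norm (\<Phi> (x + t *\<^sub>R M x)) \<le> (1 - r / 2 * t) * norm (\<Phi> x)"
      unfolding N_def by (meson power2_le_imp_le)
  qed
qed

lemma ACONV:
  fixes x \<gamma> \<eta> s :: "nat \<Rightarrow> real"
  assumes x0: "\<forall>n. x n \<ge> 0" and gpos: "\<forall>n\<ge>1. \<gamma> n > 0" and gdiv: "\<not> summable (\<lambda>k. \<gamma> (k+1))"
    and g0: "\<gamma> \<longlonglongrightarrow> 0" and eta: "\<eta> \<longlonglongrightarrow> 0" and s: "s \<longlonglongrightarrow> 0" and \<rho>: "\<rho> > 0"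
    and rec: "eventually (\<lambda>n. x (n+1) \<le> (1 - \<rho> * \<gamma> n + \<gamma> n * \<eta> n) * x n + \<gamma> n * s n) sequentially"
  shows "x \<longlonglongrightarrow> 0"
proof (rule LIMSEQ_I)
  fix e :: real assume e: "e > 0"
  define \<epsilon> where "\<epsilon> = e / 3"
  define r where "r = \<rho> / 2"
  have \<epsilon>0: "\<epsilon> > 0" and r0: "r > 0" using e \<rho> unfolding \<epsilon>_def r_def by auto
  have ev1: "eventually (\<lambda>n. \<eta> n \<le> r) sequentially"
    using order_tendstoD(2)[OF eta r0] by (rule eventually_mono) simp
  have ev2: "eventually (\<lambda>n. s n \<le> r * \<epsilon>) sequentially"
    using order_tendstoD(2)[OF s mult_pos_pos[OF r0 \<epsilon>0]] by (rule eventually_mono) simp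
  have ev3: "eventually (\<lambda>n. \<gamma> n \<le> 1 / r) sequentially"
    using order_tendstoD(2)[OF g0, of "1/r"] r0 by (auto elim: eventually_mono)
  have ev4: "eventually (\<lambda>n. n \<ge> 1) sequentially" by (rule eventually_ge_at_top)
  from eventually_conj[OF rec eventually_conj[OF ev1 eventually_conj[OF ev2 eventually_conj[OF ev3 ev4]]]]
  obtain N0 where N0: "\<And>n. n \<ge> N0 \<Longrightarrow> x (n+1) \<le> (1 - \<rho> * \<gamma> n + \<gamma> n * \<eta> n) * x n + \<gamma> n * s n
     \<and> \<eta> n \<le> r \<and> s n \<le> r * \<epsilon> \<and> \<gamma> n \<le> 1 / r \<and> n \<ge> 1"
    unfolding eventually_sequentially by blast
  define z where "z n = max (x n - \<epsilon>) 0" for n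
  have z0: "z n \<ge> 0" for n unfolding z_def by simp
  have gp: "\<gamma> n > 0" if "n \<ge> N0" for n using N0[OF that] gpos by auto
  have step: "z (n+1) \<le> z n - r * \<gamma> n * z n" if n: "n \<ge> N0" for n
  proof -
    note h = N0[OF n]
    have g: "\<gamma> n > 0" using gp[OF n] .
    have c0: "1 - r * \<gamma> n \<ge> 0" using h g r0 by (simp add: field_simps)
    have "(1 - \<rho> * \<gamma> n + \<gamma> n * \<eta> n) \<le> 1 - r * \<gamma> n"
    proof -
      have "\<gamma> n * \<eta> n \<le> \<gamma> n * r" using h g by (intro mult_left_mono) auto
      then show ?thesis unfolding r_def by (simp add: algebra_simps)
    qed
    then have "(1 - \<rho> * \<gamma> n + \<gamma> n * \<eta> n) * x n \<le> (1 - r * \<gamma> n) * x n"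
      using x0 by (intro mult_right_mono) auto
    moreover have "\<gamma> n * s n \<le> \<gamma> n * (r * \<epsilon>)" using h g by (intro mult_left_mono) auto
    ultimately have "x (n+1) \<le> (1 - r * \<gamma> n) * x n + \<gamma> n * (r * \<epsilon>)" using h by linarith
    then have "x (n+1) - \<epsilon> \<le> (1 - r * \<gamma> n) * (x n - \<epsilon>)" by (simp add: algebra_simps)
    also have "\<dots> \<le> (1 - r * \<gamma> n) * z n" using c0 unfolding z_def by (intro mult_left_mono) auto
    finally have "x (n+1) - \<epsilon> \<le> (1 - r * \<gamma> n) * z n" .
    moreover have "0 \<le> (1 - r * \<gamma> n) * z n" using c0 z0 by simp
    ultimately have "z (n+1) \<le> (1 - r * \<gamma> n) * z n" unfolding z_def by simp
    then show ?thesis by (simp add: algebra_simps)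
  qed
  have dec: "z (n+1) \<le> z n" if "n \<ge> N0" for n
    using step[OF that] gp[OF that] z0[of n] r0 by (smt (verit) mult_nonneg_nonneg)
  have ex: "\<exists>n\<ge>N0. z n \<le> \<epsilon>"
  proof (rule ccontr)
    assume "\<not> ?thesis"
    then have big: "z n > \<epsilon>" if "n \<ge> N0" for n using that by force
    have step2: "z (n+1) \<le> z n - r * \<epsilon> * \<gamma> n" if n: "n \<ge> N0" for n
    proof -
      have "r * \<gamma> n * \<epsilon> \<le> r * \<gamma> n * z n" using big[OF n] gp[OF n] r0 by (intro mult_left_mono) auto
      then show ?thesis using step[OF n] by (simp add: algebra_simps)
    qed
    have tele: "z (N0 + k) \<le> z N0 - r * \<epsilon> * (\<Sum>i<k. \<gamma> (N0 + i))" for k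
    proof (induction k)
      case 0 then show ?case by simp
    next
      case (Suc k)
      have "z (N0 + Suc k) \<le> z (N0 + k) - r * \<epsilon> * \<gamma> (N0 + k)" using step2[of "N0 + k"] by simp
      also have "\<dots> \<le> z N0 - r * \<epsilon> * (\<Sum>i<k. \<gamma> (N0 + i)) - r * \<epsilon> * \<gamma> (N0 + k)" using Suc by simp
      finally show ?case by (simp add: algebra_simps)
    qed
    have bnd: "(\<Sum>i<k. \<gamma> (i + N0)) \<le> z N0 / (r * \<epsilon>)" for k
    proof -
      have "r * \<epsilon> * (\<Sum>i<k. \<gamma> (N0 + i)) \<le> z N0" using tele[of k] z0[of "N0 + k"] by linarith
      then show ?thesis using r0 \<epsilon>0 by (simp add: field_simps add.commute)
    qed
    have "summable (\<lambda>i. \<gamma> (i + N0))"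
      by (rule summableI_nonneg_bounded[OF _ bnd]) (use gp in \<open>auto intro: less_imp_le\<close>)
    then have "summable \<gamma>" by (simp add: summable_iff_shift)
    then have "summable (\<lambda>k. \<gamma> (k+1))" using summable_iff_shift[of \<gamma> 1] by simp
    with gdiv show False by contradiction
  qed
  then obtain n1 where n1: "n1 \<ge> N0" "z n1 \<le> \<epsilon>" by blast
  have small: "z (n1 + k) \<le> \<epsilon>" for k
  proof (induction k)
    case 0 then show ?case using n1 by simp
  next
    case (Suc k) then show ?case using dec[of "n1 + k"] n1 by simp
  qed
  show "\<exists>no. \<forall>n\<ge>no. norm (x n - 0) < e"
  proof (intro exI allI impI)
    fix n assume "n \<ge> n1"
    then obtain k where "n = n1 + k" using le_Suc_ex by blast
    then have "z n \<le> \<epsilon>" using small by simp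
    then have "x n \<le> 2 * \<epsilon>" unfolding z_def by simp
    then show "norm (x n - 0) < e" using x0 e unfolding \<epsilon>_def by simp
  qed
qed

lemma matrix_add_rdistrib': "((A::'a::semiring_1^'n^'m) + B) ** C = A ** C + B ** C"
  by (simp add: Finite_Cartesian_Product.vec_eq_iff matrix_matrix_mult_def distrib_right sum.distrib)

lemma cmat_inj: "cmat x = cmat y \<Longrightarrow> x = y"
  by (simp add: Finite_Cartesian_Product.vec_eq_iff cmat_def)

lemma matrix_lyap:
  fixes A :: "real^'d^'d" and c :: real
  assumes eig: "\<forall>\<mu>. is_eigenvalue A \<mu> \<longrightarrow> Re \<mu> < - (c/2)"
  shows "\<exists>\<Phi> :: real^'d^'d \<Rightarrow> complex^'d^'d. \<exists>r>0. linear \<Phi> \<and> inj \<Phi> \<and>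
           (\<forall>w. \<Phi> w \<bullet> \<Phi> (A ** w + w ** transpose A + c *\<^sub>R w) \<le> - r * (norm (\<Phi> w))\<^sup>2)"
proof -
  obtain R Ri :: "complex^'d^'d" and \<kappa> where ka: "\<kappa> > c/2" and RRi: "R ** Ri = Finite_Cartesian_Product.mat 1"
    and RiR: "Ri ** R = Finite_Cartesian_Product.mat 1"
    and q: "\<forall>y. Re (\<Sum>i\<in>UNIV. cnj (y$i) * ((R ** cmat A ** Ri) *v y) $ i) \<le> -\<kappa> * (\<Sum>i\<in>UNIV. (cmod (y$i))\<^sup>2)"
    using KL[OF eig] by blast
  define C where "C = R ** cmat A ** Ri"
  define \<Phi> where "\<Phi> w = R ** cmat w ** Hm R" for w :: "real^'d^'d"
  have HRRi: "Hm R ** Hm Ri = Finite_Cartesian_Product.mat 1" using RiR by (simp add: Hm_mult[symmetric] Hm_one)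
  have lin: "linear \<Phi>"
  proof (rule linearI)
    show "\<Phi> (x + y) = \<Phi> x + \<Phi> y" for x y
      unfolding \<Phi>_def by (simp add: cmat_add matrix_add_ldistrib matrix_add_rdistrib')
    show "\<Phi> (r *\<^sub>R x) = r *\<^sub>R \<Phi> x" for r x
      unfolding \<Phi>_def by (simp add: cmat_scaleR matrix_scalar_ac scalar_matrix_assoc)
  qed
  have inj: "inj \<Phi>"
  proof (rule injI)
    fix x y assume "\<Phi> x = \<Phi> y"
    then have "Ri ** \<Phi> x ** Hm Ri = Ri ** \<Phi> y ** Hm Ri" by simp
    moreover have "Ri ** \<Phi> z ** Hm Ri = cmat z" for z
    proof -
      have "Ri ** \<Phi> z ** Hm Ri = (Ri ** R) ** cmat z ** (Hm R ** Hm Ri)"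
        unfolding \<Phi>_def by (simp add: matrix_mul_assoc)
      then show ?thesis using RiR HRRi by (simp add: matrix_mul_lid matrix_mul_rid)
    qed
    ultimately show "x = y" by (simp add: cmat_inj)
  qed
  have L1: "\<Phi> (A ** w) = C ** \<Phi> w" for w
  proof -
    have "C ** \<Phi> w = R ** cmat A ** (Ri ** R) ** cmat w ** Hm R"
      unfolding C_def \<Phi>_def by (simp add: matrix_mul_assoc)
    then show ?thesis unfolding \<Phi>_def using RiR by (simp add: matrix_mul_rid cmat_mult matrix_mul_assoc)
  qed
  have L2: "\<Phi> (w ** transpose A) = \<Phi> w ** Hm C" for w
  proof -
    have "\<Phi> w ** Hm C = R ** cmat w ** (Hm R ** Hm Ri) ** Hm (cmat A) ** Hm R"
      unfolding C_def \<Phi>_def by (simp add: Hm_mult matrix_mul_assoc)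
    then show ?thesis unfolding \<Phi>_def using HRRi
      by (simp add: matrix_mul_rid cmat_mult cmat_transpose matrix_mul_assoc)
  qed
  have qC: "\<forall>y. Re (\<Sum>i\<in>UNIV. cnj (y$i) * (C *v y) $ i) \<le> -\<kappa> * (\<Sum>i\<in>UNIV. (cmod (y$i))\<^sup>2)"
    using q unfolding C_def .
  show ?thesis
  proof (intro exI[of _ \<Phi>] exI[of _ "2 * \<kappa> - c"] conjI allI lin inj)
    show "2 * \<kappa> - c > 0" using ka by simp
    fix w
    have "\<Phi> (A ** w + w ** transpose A + c *\<^sub>R w) = C ** \<Phi> w + \<Phi> w ** Hm C + c *\<^sub>R \<Phi> w"
      using lin by (simp add: linear_add linear_scale L1 L2)
    then have "\<Phi> w \<bullet> \<Phi> (A ** w + w ** transpose A + c *\<^sub>R w)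
        = \<Phi> w \<bullet> (C ** \<Phi> w) + \<Phi> w \<bullet> (\<Phi> w ** Hm C) + c * (norm (\<Phi> w))\<^sup>2"
      by (simp add: inner_add_right power2_norm_eq_inner)
    also have "\<dots> \<le> -\<kappa> * (norm (\<Phi> w))\<^sup>2 + -\<kappa> * (norm (\<Phi> w))\<^sup>2 + c * (norm (\<Phi> w))\<^sup>2"
      using frob_left[OF qC, of "\<Phi> w"] frob_right[OF qC, of "\<Phi> w"] by linarith
    also have "\<dots> = - (2 * \<kappa> - c) * (norm (\<Phi> w))\<^sup>2" by (simp add: algebra_simps)
    finally show "\<Phi> w \<bullet> \<Phi> (A ** w + w ** transpose A + c *\<^sub>R w) \<le> - (2 * \<kappa> - c) * (norm (\<Phi> w))\<^sup>2" .
  qed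
qed

definition cvec :: "real^'n \<Rightarrow> complex^'n" where "cvec y = (\<chi> i. complex_of_real (y $ i))"

lemma cvec_mult: "cvec (M *v y) = cmat M *v cvec y"
  by (simp add: Finite_Cartesian_Product.vec_eq_iff cvec_def matrix_vector_mult_def)

lemma cvec_add: "cvec (x + y) = cvec x + cvec y"
  by (simp add: Finite_Cartesian_Product.vec_eq_iff cvec_def)

lemma mv_scaleR: "(M::complex^'n^'m) *v (r *\<^sub>R v) = r *\<^sub>R (M *v v)"
  by (simp add: Finite_Cartesian_Product.vec_eq_iff matrix_vector_mult_def scaleR_sum_right)

lemma inner_cvec: "(u::complex^'n) \<bullet> w = Re (\<Sum>i\<in>UNIV. cnj (u $ i) * w $ i)"
  by (simp add: inner_vec_def cinner_eq Re_sum)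

lemma vec_lyap:
  fixes A :: "real^'d^'d" and c :: real
  assumes eig: "\<forall>\<mu>. is_eigenvalue A \<mu> \<longrightarrow> Re \<mu> < - (c/2)"
  shows "\<exists>\<Psi> :: real^'d \<Rightarrow> complex^'d. \<exists>r>0. linear \<Psi> \<and> inj \<Psi> \<and>
           (\<forall>y. \<Psi> y \<bullet> \<Psi> (transpose A *v y + (c/2) *\<^sub>R y) \<le> - r * (norm (\<Psi> y))\<^sup>2)"
proof -
  have eigT: "\<forall>\<mu>. is_eigenvalue (transpose A) \<mu> \<longrightarrow> Re \<mu> < - (c/2)"
    using eig eig_transpose by blast
  obtain R Ri :: "complex^'d^'d" and \<kappa> where ka: "\<kappa> > c/2" and RRi: "R ** Ri = Finite_Cartesian_Product.mat 1"
    and RiR: "Ri ** R = Finite_Cartesian_Product.mat 1"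
    and q: "\<forall>y. Re (\<Sum>i\<in>UNIV. cnj (y$i) * ((R ** cmat (transpose A) ** Ri) *v y) $ i) \<le> -\<kappa> * (\<Sum>i\<in>UNIV. (cmod (y$i))\<^sup>2)"
    using KL[OF eigT] by blast
  define C where "C = R ** cmat (transpose A) ** Ri"
  define \<Psi> where "\<Psi> y = R *v cvec y" for y :: "real^'d"
  have lin: "linear \<Psi>"
  proof (rule linearI)
    show "\<Psi> (x + y) = \<Psi> x + \<Psi> y" for x y
      unfolding \<Psi>_def by (simp add: cvec_add matrix_vector_right_distrib)
    show "\<Psi> (r *\<^sub>R x) = r *\<^sub>R \<Psi> x" for r x
    proof -
      have "cvec (r *\<^sub>R x) = r *\<^sub>R cvec x" by (simp add: cvec_def Finite_Cartesian_Product.vec_eq_iff complex_eq_iff)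
      then show ?thesis unfolding \<Psi>_def by (simp add: mv_scaleR)
    qed
  qed
  have inj: "inj \<Psi>"
  proof (rule injI)
    fix x y assume "\<Psi> x = \<Psi> y"
    then have "Ri *v \<Psi> x = Ri *v \<Psi> y" by simp
    then have "cvec x = cvec y" unfolding \<Psi>_def using RiR by (simp add: matrix_vector_mul_assoc)
    then show "x = y" by (simp add: cvec_def Finite_Cartesian_Product.vec_eq_iff)
  qed
  have L1: "\<Psi> (transpose A *v y) = C *v \<Psi> y" for y
  proof -
    have "C *v \<Psi> y = (R ** cmat (transpose A)) ** (Ri ** R) *v cvec y"
      unfolding C_def \<Psi>_def by (simp only: matrix_vector_mul_assoc matrix_mul_assoc)
    also have "\<dots> = (R ** cmat (transpose A)) *v cvec y" using RiR by (simp only: matrix_mul_rid)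
    also have "\<dots> = \<Psi> (transpose A *v y)" unfolding \<Psi>_def by (simp only: cvec_mult matrix_vector_mul_assoc)
    finally show ?thesis by simp
  qed
  show ?thesis
  proof (intro exI[of _ \<Psi>] exI[of _ "\<kappa> - c/2"] conjI allI lin inj)
    show "\<kappa> - c/2 > 0" using ka by simp
    fix y
    have "\<Psi> (transpose A *v y + (c/2) *\<^sub>R y) = C *v \<Psi> y + (c/2) *\<^sub>R \<Psi> y"
      using lin by (simp add: linear_add linear_scale L1 del: transpose_matrix_vector)
    then have "\<Psi> y \<bullet> \<Psi> (transpose A *v y + (c/2) *\<^sub>R y) = \<Psi> y \<bullet> (C *v \<Psi> y) + (c/2) * (norm (\<Psi> y))\<^sup>2"
      by (simp add: inner_add_right power2_norm_eq_inner)
    also have "\<Psi> y \<bullet> (C *v \<Psi> y) \<le> -\<kappa> * (norm (\<Psi> y))\<^sup>2"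
    proof -
      have "\<Psi> y \<bullet> (C *v \<Psi> y) = Re (\<Sum>i\<in>UNIV. cnj (\<Psi> y $ i) * (C *v \<Psi> y) $ i)" by (rule inner_cvec)
      also have "\<dots> \<le> -\<kappa> * (\<Sum>i\<in>UNIV. (cmod (\<Psi> y $ i))\<^sup>2)" using q unfolding C_def by blast
      also have "(\<Sum>i\<in>UNIV. (cmod (\<Psi> y $ i))\<^sup>2) = (norm (\<Psi> y))\<^sup>2"
        by (simp add: power2_norm_eq_inner inner_vec_def)
      finally show ?thesis .
    qed
    finally show "\<Psi> y \<bullet> \<Psi> (transpose A *v y + (c/2) *\<^sub>R y) \<le> - (\<kappa> - c/2) * (norm (\<Psi> y))\<^sup>2"
      by (simp add: algebra_simps)
  qed
qed

lemma coercive: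
  fixes Us :: "real^'d^'d"
  assumes "pos_def Us"
  shows "\<exists>mu>0. \<forall>y. mu * (norm y)\<^sup>2 \<le> y \<bullet> (Us *v y)"
proof -
  let ?f = "\<lambda>y::real^'d. y \<bullet> (Us *v y)"
  have ne: "sphere (0::real^'d) 1 \<noteq> {}"
  proof -
    obtain i :: 'd where True by blast
    have "axis i (1::real) \<in> sphere 0 1" by (simp add: sphere_def dist_norm)
    then show ?thesis by blast
  qed
  have cont: "continuous_on (sphere 0 1) ?f"
    by (intro continuous_intros matrix_vector_mult_linear_continuous_on)
  obtain x0 where x0: "x0 \<in> sphere 0 1" and min: "\<forall>y\<in>sphere 0 1. ?f x0 \<le> ?f y"
    using continuous_attains_inf[OF compact_sphere ne cont] by blast
  have "x0 \<noteq> 0" using x0 by auto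
  then have mu: "?f x0 > 0" using assms unfolding pos_def_def by blast
  show ?thesis
  proof (intro exI[of _ "?f x0"] conjI allI mu)
    fix y :: "real^'d"
    show "?f x0 * (norm y)\<^sup>2 \<le> ?f y"
    proof (cases "y = 0")
      case True then show ?thesis by simp
    next
      case False
      define u where "u = (1 / norm y) *\<^sub>R y"
      have u: "u \<in> sphere 0 1" using False unfolding u_def by (simp add: norm_scaleR)
      have y: "y = norm y *\<^sub>R u" using False unfolding u_def by simp
      have eq: "?f y = ?f u * (norm y)\<^sup>2"
        by (subst (1 2) y) (simp add: matrix_vector_mult_scaleR power2_eq_square)
      have "?f x0 \<le> ?f u" using min u by blast
      then have "?f x0 * (norm y)\<^sup>2 \<le> ?f u * (norm y)\<^sup>2" by (rule mult_right_mono) simp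
      then show ?thesis using eq by simp
    qed
  qed
qed

lemma sym_q:
  fixes V :: "real^'d^'d"
  assumes "transpose V = V"
  shows "a \<bullet> (V *v b) = b \<bullet> (V *v a)"
proof -
  have "a \<bullet> (V *v b) = (a v* V) \<bullet> b" by (simp add: dot_lmul_matrix)
  also have "\<dots> = (transpose V *v a) \<bullet> b" by (simp add: transpose_matrix_vector)
  also have "\<dots> = b \<bullet> (V *v a)" using assms by (simp add: inner_commute)
  finally show ?thesis .
qed

lemma q_identity:
  fixes A Us V :: "real^'d^'d" and c t :: real and y :: "real^'d"
  assumes Vs: "transpose V = V" and eq: "Us + (A ** V + V ** transpose A + c *\<^sub>R V) = 0"
  defines "z \<equiv> transpose A *v y + (c/2) *\<^sub>R y"
  shows "(y + t *\<^sub>R z) \<bullet> (V *v (y + t *\<^sub>R z)) = y \<bullet> (V *v y) - t * (y \<bullet> (Us *v y)) + t\<^sup>2 * (z \<bullet> (V *v z))"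
proof -
  have s1: "z \<bullet> (V *v y) = y \<bullet> (V *v z)" using sym_q[OF Vs] by simp
  have s2: "y \<bullet> (A *v (V *v y)) = y \<bullet> (V *v (transpose A *v y))"
  proof -
    have "y \<bullet> (A *v (V *v y)) = (y v* A) \<bullet> (V *v y)" by (simp add: dot_lmul_matrix)
    also have "\<dots> = (transpose A *v y) \<bullet> (V *v y)" by (simp add: transpose_matrix_vector)
    also have "\<dots> = y \<bullet> (V *v (transpose A *v y))" using sym_q[OF Vs] by simp
    finally show ?thesis .
  qed
  have X: "y \<bullet> ((A ** V + V ** transpose A + c *\<^sub>R V) *v y) = y \<bullet> (A *v (V *v y)) + y \<bullet> (V *v (transpose A *v y)) + c * (y \<bullet> (V *v y))"
    by (simp add: matrix_vector_mult_add_rdistrib matrix_vector_mul_assoc[symmetric] inner_add_right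
        scaleR_matrix_vector_assoc[symmetric] del: transpose_matrix_vector)
  have h: "(Us + (A ** V + V ** transpose A + c *\<^sub>R V)) *v y = 0" unfolding eq by simp
  then have "Us *v y + (A ** V + V ** transpose A + c *\<^sub>R V) *v y = 0" by (simp only: matrix_vector_mult_add_rdistrib)
  then have "y \<bullet> (Us *v y) + y \<bullet> ((A ** V + V ** transpose A + c *\<^sub>R V) *v y) = 0"
    by (metis inner_add_right inner_zero_right)
  then have "y \<bullet> (Us *v y) = - (y \<bullet> (A *v (V *v y)) + y \<bullet> (V *v (transpose A *v y)) + c * (y \<bullet> (V *v y)))"
    unfolding X by linarith
  also have "\<dots> = - 2 * (y \<bullet> (V *v z))"
    unfolding s2 z_def by (simp add: matrix_vector_right_distrib matrix_vector_mult_scaleR inner_add_right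
        del: transpose_matrix_vector)
  finally have k: "y \<bullet> (Us *v y) = - 2 * (y \<bullet> (V *v z))" .
  have "(y + t *\<^sub>R z) \<bullet> (V *v (y + t *\<^sub>R z)) = y \<bullet> (V *v y) + t * (y \<bullet> (V *v z)) + t * (z \<bullet> (V *v y)) + t\<^sup>2 * (z \<bullet> (V *v z))"
    by (simp add: matrix_vector_right_distrib matrix_vector_mult_scaleR inner_add_left inner_add_right
        power2_eq_square algebra_simps del: transpose_matrix_vector)
  also have "\<dots> = y \<bullet> (V *v y) - t * (y \<bullet> (Us *v y)) + t\<^sup>2 * (z \<bullet> (V *v z))"
    unfolding s1 k by (simp add: algebra_simps)
  finally show ?thesis .
qed

lemma pd_from:
  fixes A Us V :: "real^'d^'d" and c r :: real and \<Psi> :: "real^'d \<Rightarrow> complex^'d"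
  assumes lin: "linear \<Psi>" and inj: "inj \<Psi>" and r: "r > 0"
    and neg: "\<forall>y. \<Psi> y \<bullet> \<Psi> (transpose A *v y + (c/2) *\<^sub>R y) \<le> - r * (norm (\<Psi> y))\<^sup>2"
    and Us: "pos_def Us" and Vs: "transpose V = V" and eq: "Us + (A ** V + V ** transpose A + c *\<^sub>R V) = 0"
  shows "pos_def V"
  unfolding pos_def_def
proof (intro conjI allI impI Vs)
  fix y0 :: "real^'d" assume y0: "y0 \<noteq> 0"
  define M where "M y = transpose A *v y + (c/2) *\<^sub>R y" for y :: "real^'d"
  have linM: "linear M"
    by (rule linearI) (simp_all add: M_def matrix_vector_right_distrib matrix_vector_mult_scaleR algebra_simps
        del: transpose_matrix_vector)
  obtain m\<Psi> where m\<Psi>: "m\<Psi> > 0" "\<And>x. m\<Psi> * norm x \<le> norm (\<Psi> x)"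
    using linear_inj_bounded_below_pos[OF lin inj] by blast
  have negM: "\<forall>x. \<Psi> x \<bullet> \<Psi> (M x) \<le> - r * (norm (\<Psi> x))\<^sup>2" using neg unfolding M_def .
  obtain t0 \<rho> where t0: "t0 > 0" and \<rho>: "\<rho> > 0"
    and contr: "\<forall>t x. 0 < t \<and> t \<le> t0 \<longrightarrow> norm (\<Psi> (x + t *\<^sub>R M x)) \<le> (1 - \<rho> * t) * norm (\<Psi> x)"
    using ACL[OF lin linM m\<Psi>(1) _ negM r] m\<Psi>(2) by blast
  obtain mu where mu: "mu > 0" "\<forall>y. mu * (norm y)\<^sup>2 \<le> y \<bullet> (Us *v y)" using coercive[OF Us] by blast
  obtain BM where BM: "BM > 0" "\<And>x. norm (M x) \<le> BM * norm x" using linear_bounded_pos[OF linM] by blast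
  obtain BV where BV: "BV > 0" "\<And>x. norm (V *v x) \<le> BV * norm x"
    using linear_bounded_pos[OF matrix_vector_mul_linear[of V]] by blast
  define q where "q z = z \<bullet> (V *v z)" for z :: "real^'d"
  define KB where "KB = BV * BM\<^sup>2"
  have KB0: "KB \<ge> 0" unfolding KB_def using BV BM by simp
  have qM: "q (M y) \<le> KB * (norm y)\<^sup>2" for y
  proof -
    have "q (M y) \<le> norm (M y) * norm (V *v M y)" unfolding q_def by (rule norm_cauchy_schwarz)
    also have "\<dots> \<le> norm (M y) * (BV * norm (M y))" by (intro mult_left_mono BV(2)) simp
    also have "\<dots> = BV * (norm (M y))\<^sup>2" by (simp add: power2_eq_square)
    also have "\<dots> \<le> BV * (BM * norm y)\<^sup>2" using BV(1) BM(2)[of y] by (intro mult_left_mono power_mono) auto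
    finally show ?thesis unfolding KB_def by (simp add: power_mult_distrib)
  qed
  define t where "t = min t0 (min (1 / (2 * \<rho>)) (mu / (2 * KB + 1)))"
  have "2 * KB + 1 > 0" using KB0 by simp
  then have t_pos: "t > 0" using t0 \<rho> mu unfolding t_def by auto
  have t_t0: "t \<le> t0" unfolding t_def by simp
  have t_rho: "\<rho> * t \<le> 1/2"
  proof -
    have "t \<le> 1 / (2 * \<rho>)" unfolding t_def by simp
    then have "\<rho> * t \<le> \<rho> * (1 / (2 * \<rho>))" using \<rho> by (intro mult_left_mono) auto
    then show ?thesis using \<rho> by simp
  qed
  have t_KB: "t * KB \<le> mu / 2"
  proof -
    have "t \<le> mu / (2 * KB + 1)" unfolding t_def by simp
    then have "t * KB \<le> mu / (2 * KB + 1) * KB" using KB0 by (intro mult_right_mono) auto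
    also have "\<dots> \<le> mu / 2" using KB0 mu by (simp add: field_simps)
    finally show ?thesis .
  qed
  define F where "F y = y + t *\<^sub>R M y" for y
  define ys where "ys k = (F ^^ k) y0" for k
  have ys_Suc: "ys (Suc k) = F (ys k)" for k unfolding ys_def by simp
  have qstep: "q (F y) \<le> q y - (t * mu / 2) * (norm y)\<^sup>2" for y
  proof -
    have "q (F y) = q y - t * (y \<bullet> (Us *v y)) + t\<^sup>2 * q (M y)"
      unfolding q_def F_def M_def by (rule q_identity[OF Vs eq])
    also have "\<dots> \<le> q y - t * (mu * (norm y)\<^sup>2) + t\<^sup>2 * (KB * (norm y)\<^sup>2)"
    proof -
      have "t * (mu * (norm y)\<^sup>2) \<le> t * (y \<bullet> (Us *v y))" using mu t_pos by (intro mult_left_mono) auto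
      moreover have "t\<^sup>2 * q (M y) \<le> t\<^sup>2 * (KB * (norm y)\<^sup>2)" using qM by (intro mult_left_mono) auto
      ultimately show ?thesis by linarith
    qed
    also have "\<dots> = q y - t * (norm y)\<^sup>2 * (mu - t * KB)" by (simp add: power2_eq_square algebra_simps)
    also have "\<dots> \<le> q y - t * (norm y)\<^sup>2 * (mu / 2)"
      using t_KB t_pos by (intro diff_left_mono mult_left_mono) auto
    finally show ?thesis by (simp add: algebra_simps)
  qed
  have dec: "decseq (\<lambda>k. q (ys k))"
  proof (rule decseq_SucI)
    fix k show "q (ys (Suc k)) \<le> q (ys k)" unfolding ys_Suc using qstep[of "ys k"] t_pos mu
      by (smt (verit) mult_nonneg_nonneg zero_le_power2 divide_nonneg_pos)
  qed
  have Pbound: "norm (\<Psi> (ys k)) \<le> (1 - \<rho> * t) ^ k * norm (\<Psi> y0)" for k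
  proof (induction k)
    case 0 then show ?case by (simp add: ys_def)
  next
    case (Suc k)
    have "norm (\<Psi> (ys (Suc k))) \<le> (1 - \<rho> * t) * norm (\<Psi> (ys k))"
      unfolding ys_Suc F_def using contr t_pos t_t0 by blast
    also have "\<dots> \<le> (1 - \<rho> * t) * ((1 - \<rho> * t) ^ k * norm (\<Psi> y0))"
      using Suc t_rho by (intro mult_left_mono) auto
    finally show ?case by simp
  qed
  have ys0: "ys \<longlonglongrightarrow> 0"
  proof (rule Lim_null_comparison)
    show "\<forall>\<^sub>F k in sequentially. norm (ys k) \<le> (1 - \<rho> * t) ^ k * (norm (\<Psi> y0) / m\<Psi>)"
    proof (rule always_eventually, rule allI)
      fix k
      have "m\<Psi> * norm (ys k) \<le> (1 - \<rho> * t) ^ k * norm (\<Psi> y0)" using m\<Psi>(2)[of "ys k"] Pbound[of k] by linarith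
      then show "norm (ys k) \<le> (1 - \<rho> * t) ^ k * (norm (\<Psi> y0) / m\<Psi>)" using m\<Psi>(1) by (simp add: field_simps)
    qed
    have "(\<lambda>k. (1 - \<rho> * t) ^ k) \<longlonglongrightarrow> 0"
      by (rule LIMSEQ_power_zero) (use t_rho t_pos \<rho> in \<open>auto simp: abs_if\<close>)
    then show "(\<lambda>k. (1 - \<rho> * t) ^ k * (norm (\<Psi> y0) / m\<Psi>)) \<longlonglongrightarrow> 0"
      by (rule tendsto_mult_left_zero)
  qed
  have q0: "(\<lambda>k. q (ys k)) \<longlonglongrightarrow> 0"
  proof -
    have "(\<lambda>k. V *v ys k) \<longlonglongrightarrow> V *v 0"
      by (rule bounded_linear.tendsto[OF matrix_vector_mul_bounded_linear ys0])
    then have "(\<lambda>k. ys k \<bullet> (V *v ys k)) \<longlonglongrightarrow> 0 \<bullet> (V *v 0)" using ys0 by (intro tendsto_inner)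
    then show ?thesis unfolding q_def by simp
  qed
  have "q (ys 1) \<ge> 0" using decseq_ge[OF dec q0] by simp
  moreover have "q (ys 1) \<le> q y0 - (t * mu / 2) * (norm y0)\<^sup>2" using qstep[of y0] by (simp add: ys_def)
  moreover have "(t * mu / 2) * (norm y0)\<^sup>2 > 0" using t_pos mu y0 by simp
  ultimately show "0 < y0 \<bullet> (V *v y0)" unfolding q_def by linarith
qed

lemma transpose_add': "transpose ((X::'a::semiring_1^'n^'n) + Y) = transpose X + transpose Y"
  by (simp add: Finite_Cartesian_Product.vec_eq_iff transpose_def)

lemma transpose_uminus': "transpose (- (X::'a::ring_1^'n^'n)) = - transpose X"
  by (simp add: Finite_Cartesian_Product.vec_eq_iff transpose_def)

lemma CORE:
  fixes A Us :: "real^'d^'d" and c :: real and \<gamma> a d :: "nat \<Rightarrow> real" and v :: "nat \<Rightarrow> real^'d^'d"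
  assumes eig: "\<forall>\<mu>. is_eigenvalue A \<mu> \<longrightarrow> Re \<mu> < - (c/2)"
  and Us: "pos_def Us"
  and gpos: "\<forall>n\<ge>1. \<gamma> n > 0" and gdiv: "\<not> summable (\<lambda>k. \<gamma> (k+1))" and g0: "\<gamma> \<longlonglongrightarrow> 0"
  and a0: "(\<lambda>n. a n / \<gamma> n) \<longlonglongrightarrow> 0" and d0: "(\<lambda>n. d n / \<gamma> n) \<longlonglongrightarrow> 0"
  and rec: "\<forall>n\<ge>1. v (n+1) = v n + \<gamma> n *\<^sub>R (Us + (A ** v n + v n ** transpose A + c *\<^sub>R v n))
               + a n *\<^sub>R v n + d n *\<^sub>R Us + (\<gamma> n * \<gamma> (n+1)) *\<^sub>R (A ** v n ** transpose A)"
  shows "\<exists>V. pos_def V \<and> Us + (A ** V + V ** transpose A + c *\<^sub>R V) = 0 \<and>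
           (\<forall>W. pos_def W \<and> Us + (A ** W + W ** transpose A + c *\<^sub>R W) = 0 \<longrightarrow> W = V) \<and> v \<longlonglongrightarrow> V"
proof -
  define Lop where "Lop w = A ** w + w ** transpose A + c *\<^sub>R w" for w :: "real^'d^'d"
  have linL: "linear Lop"
    by (rule linearI) (simp_all add: Lop_def matrix_add_ldistrib matrix_add_rdistrib' matrix_scalar_ac
        scalar_matrix_assoc algebra_simps)
  obtain \<Phi> :: "real^'d^'d \<Rightarrow> complex^'d^'d" and r where r: "r > 0" and lin\<Phi>: "linear \<Phi>" and inj\<Phi>: "inj \<Phi>"
    and neg: "\<forall>w. \<Phi> w \<bullet> \<Phi> (Lop w) \<le> - r * (norm (\<Phi> w))\<^sup>2"
    using matrix_lyap[OF eig] unfolding Lop_def by blast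
  have injL: "inj Lop"
    unfolding linear_injective_0[OF linL]
  proof (intro allI impI)
    fix w assume "Lop w = 0"
    then have "0 \<le> - r * (norm (\<Phi> w))\<^sup>2" using neg[rule_format, of w] linear_0[OF lin\<Phi>] by simp
    then have "\<Phi> w = 0" using r by (simp add: mult_le_0_iff)
    then show "w = 0" using inj\<Phi> linear_injective_0[OF lin\<Phi>] by blast
  qed
  have "surj Lop" by (rule linear_injective_imp_surjective[OF linL injL]) simp
  then obtain V where LV: "Lop V = - Us" by (metis surjD)
  have eqV: "Us + Lop V = 0" using LV by simp
  have uniq: "W = V" if "Us + Lop W = 0" for W
  proof -
    have "Lop W = Lop V" using that LV by (simp add: add_eq_0_iff)
    then show ?thesis using injL by (simp add: inj_eq)
  qed
  have Vs: "transpose V = V"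
  proof -
    have "Lop (transpose V) = transpose (Lop V)"
      by (simp add: Lop_def transpose_add' matrix_transpose_mul transpose_transpose transpose_scalar add.commute)
    also have "\<dots> = Lop V" using Us LV by (simp add: pos_def_def transpose_uminus')
    finally show ?thesis using injL by (simp add: inj_eq)
  qed
  obtain \<Psi> :: "real^'d \<Rightarrow> complex^'d" and r2 where "linear \<Psi>" "inj \<Psi>" "r2 > 0"
    "\<forall>y. \<Psi> y \<bullet> \<Psi> (transpose A *v y + (c/2) *\<^sub>R y) \<le> - r2 * (norm (\<Psi> y))\<^sup>2"
    using vec_lyap[OF eig] by blast
  from pd_from[OF this Us Vs] eqV have pdV: "pos_def V" unfolding Lop_def by blast
  obtain m\<Phi> where m\<Phi>: "m\<Phi> > 0" "\<And>x. m\<Phi> * norm x \<le> norm (\<Phi> x)"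
    using linear_inj_bounded_below_pos[OF lin\<Phi> inj\<Phi>] by blast
  obtain B\<Phi> where B\<Phi>: "B\<Phi> > 0" "\<And>x. norm (\<Phi> x) \<le> B\<Phi> * norm x" using linear_bounded_pos[OF lin\<Phi>] by blast
  obtain t0 \<rho> where t0: "t0 > 0" and \<rho>: "\<rho> > 0"
    and contr: "\<forall>t x. 0 < t \<and> t \<le> t0 \<longrightarrow> norm (\<Phi> (x + t *\<^sub>R Lop x)) \<le> (1 - \<rho> * t) * norm (\<Phi> x)"
    using ACL[OF lin\<Phi> linL m\<Phi>(1) _ neg r] m\<Phi>(2) by blast
  have linA: "linear (\<lambda>w::real^'d^'d. A ** w ** transpose A)"
    by (rule linearI) (simp_all add: matrix_add_ldistrib matrix_add_rdistrib' matrix_scalar_ac scalar_matrix_assoc)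
  obtain BA where BA: "BA > 0" "\<And>w. norm (A ** w ** transpose A) \<le> BA * norm w"
    using linear_bounded_pos[OF linA] by blast
  define e where "e n = v n - V" for n
  define x where "x n = norm (\<Phi> (e n))" for n
  define \<eta> where "\<eta> n = B\<Phi> * (\<bar>a n / \<gamma> n\<bar> + \<gamma> (Suc n) * BA) / m\<Phi>" for n
  define s where "s n = B\<Phi> * ((\<bar>a n / \<gamma> n\<bar> + \<gamma> (Suc n) * BA) * norm V + \<bar>d n / \<gamma> n\<bar> * norm Us)" for n
  have gS: "(\<lambda>n. \<gamma> (Suc n)) \<longlonglongrightarrow> 0" using LIMSEQ_Suc[OF g0] .
  have eta0: "\<eta> \<longlonglongrightarrow> 0" unfolding \<eta>_def
    using tendsto_divide[OF tendsto_mult[OF tendsto_const tendsto_add[OF tendsto_rabs[OF a0] tendsto_mult[OF gS tendsto_const]]] tendsto_const, of m\<Phi> B\<Phi> BA] m\<Phi>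
    by simp
  have s0: "s \<longlonglongrightarrow> 0" unfolding s_def
    using tendsto_mult[OF tendsto_const tendsto_add[OF tendsto_mult[OF tendsto_add[OF tendsto_rabs[OF a0] tendsto_mult[OF gS tendsto_const]] tendsto_const] tendsto_mult[OF tendsto_rabs[OF d0] tendsto_const]], of B\<Phi> BA "norm V" "norm Us"]
    by simp
  have step: "x (n+1) \<le> (1 - \<rho> * \<gamma> n + \<gamma> n * \<eta> n) * x n + \<gamma> n * s n"
    if n: "n \<ge> 1" "\<gamma> n \<le> t0" for n
  proof -
    have g: "\<gamma> n > 0" using gpos n by auto
    define P where "P = a n *\<^sub>R v n + d n *\<^sub>R Us + (\<gamma> n * \<gamma> (n+1)) *\<^sub>R (A ** v n ** transpose A)"
    have Le: "Us + Lop (v n) = Lop (e n)"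
    proof -
      have "Lop (e n) = Lop (v n) - Lop V" unfolding e_def by (rule linear_diff[OF linL])
      then show ?thesis using LV by simp
    qed
    have r1: "v (n+1) = v n + \<gamma> n *\<^sub>R (Us + Lop (v n)) + P"
      using rec[rule_format, OF n(1)] unfolding Lop_def P_def by (simp only: add.assoc)
    have "e (n+1) = (v n - V) + \<gamma> n *\<^sub>R (Us + Lop (v n)) + P" unfolding e_def r1 by (simp add: algebra_simps)
    then have en1: "e (n+1) = (e n + \<gamma> n *\<^sub>R Lop (e n)) + P" unfolding Le by (simp add: e_def)
    have x1: "x (n+1) \<le> (1 - \<rho> * \<gamma> n) * x n + B\<Phi> * norm P"
    proof -
      have "x (n+1) = norm (\<Phi> (e n + \<gamma> n *\<^sub>R Lop (e n)) + \<Phi> P)"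
        unfolding x_def en1 by (simp add: linear_add[OF lin\<Phi>])
      also have "\<dots> \<le> norm (\<Phi> (e n + \<gamma> n *\<^sub>R Lop (e n))) + norm (\<Phi> P)" by (rule norm_triangle_ineq)
      also have "\<dots> \<le> (1 - \<rho> * \<gamma> n) * x n + B\<Phi> * norm P"
        using contr g n(2) B\<Phi>(2)[of P] unfolding x_def by (meson add_mono)
      finally show ?thesis .
    qed
    have vn: "norm (v n) \<le> x n / m\<Phi> + norm V"
    proof -
      have "norm (v n) \<le> norm (e n) + norm V" unfolding e_def by (metis norm_triangle_sub add.commute)
      moreover have "norm (e n) \<le> x n / m\<Phi>" using m\<Phi> unfolding x_def by (simp add: field_simps mult.commute)
      ultimately show ?thesis by linarith
    qed
    have Pb: "norm P \<le> \<gamma> n * ((\<bar>a n / \<gamma> n\<bar> + \<gamma> (Suc n) * BA) * norm (v n) + \<bar>d n / \<gamma> n\<bar> * norm Us)"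
    proof -
      have "norm P \<le> \<bar>a n\<bar> * norm (v n) + \<bar>d n\<bar> * norm Us + (\<gamma> n * \<gamma> (n+1)) * (BA * norm (v n))"
      proof -
        have "norm P \<le> norm (a n *\<^sub>R v n) + norm (d n *\<^sub>R Us) + norm ((\<gamma> n * \<gamma> (n+1)) *\<^sub>R (A ** v n ** transpose A))"
          unfolding P_def by (meson norm_triangle_le norm_triangle_ineq add_mono order_refl)
        moreover have "norm ((\<gamma> n * \<gamma> (n+1)) *\<^sub>R (A ** v n ** transpose A)) \<le> (\<gamma> n * \<gamma> (n+1)) * (BA * norm (v n))"
        proof -
          have "\<gamma> (n+1) > 0" using gpos n by auto
          then show ?thesis using g BA(2)[of "v n"] by (simp add: abs_mult mult_left_mono)
        qed
        ultimately show ?thesis by simp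
      qed
      also have "\<dots> = \<gamma> n * ((\<bar>a n / \<gamma> n\<bar> + \<gamma> (Suc n) * BA) * norm (v n) + \<bar>d n / \<gamma> n\<bar> * norm Us)"
        using g by (simp add: abs_div field_simps)
      finally show ?thesis .
    qed
    have "B\<Phi> * norm P \<le> \<gamma> n * (\<eta> n * x n + s n)"
    proof -
      have "B\<Phi> * norm P \<le> B\<Phi> * (\<gamma> n * ((\<bar>a n / \<gamma> n\<bar> + \<gamma> (Suc n) * BA) * (x n / m\<Phi> + norm V) + \<bar>d n / \<gamma> n\<bar> * norm Us))"
      proof -
        have "\<gamma> (Suc n) \<ge> 0" using gpos by (simp add: less_imp_le)
        then have "(\<bar>a n / \<gamma> n\<bar> + \<gamma> (Suc n) * BA) * norm (v n) \<le> (\<bar>a n / \<gamma> n\<bar> + \<gamma> (Suc n) * BA) * (x n / m\<Phi> + norm V)"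
          using vn BA by (intro mult_left_mono) auto
        then show ?thesis using Pb g B\<Phi> by (smt (verit) mult_left_mono)
      qed
      also have "\<dots> = \<gamma> n * (\<eta> n * x n + s n)" unfolding \<eta>_def s_def using m\<Phi>(1) g by (simp add: abs_div field_simps)
      finally show ?thesis .
    qed
    with x1 show ?thesis by (simp add: algebra_simps)
  qed
  have ev: "eventually (\<lambda>n. x (n+1) \<le> (1 - \<rho> * \<gamma> n + \<gamma> n * \<eta> n) * x n + \<gamma> n * s n) sequentially"
  proof -
    have "eventually (\<lambda>n. \<gamma> n < t0) sequentially" using order_tendstoD(2)[OF g0 t0] .
    moreover have "eventually (\<lambda>n. n \<ge> 1) sequentially" by (rule eventually_ge_at_top)
    ultimately show ?thesis by eventually_elim (use step in auto)
  qed
  have x0: "x \<longlonglongrightarrow> 0" by (rule ACONV[OF _ gpos gdiv g0 eta0 s0 \<rho> ev]) (simp add: x_def)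
  have "e \<longlonglongrightarrow> 0"
  proof (rule Lim_null_comparison)
    show "\<forall>\<^sub>F n in sequentially. norm (e n) \<le> x n / m\<Phi>"
      using m\<Phi> unfolding x_def by (intro always_eventually allI) (simp add: field_simps mult.commute)
    show "(\<lambda>n. x n / m\<Phi>) \<longlonglongrightarrow> 0" using tendsto_divide[OF x0 tendsto_const, of m\<Phi>] m\<Phi> by simp
  qed
  then have "v \<longlonglongrightarrow> V" unfolding e_def by (rule LIM_zero_cancel)
  then show ?thesis using pdV eqV uniq unfolding Lop_def by blast
qed

lemma exp_sub_one_bound:
  fixes x :: real assumes "\<bar>x\<bar> \<le> 1" shows "\<bar>exp x - 1\<bar> \<le> 2 * \<bar>x\<bar>"
proof (cases "x \<ge> 0")
  case True
  have "exp x \<le> 1 + x + x\<^sup>2" using exp_bound[OF True] assms by simp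
  moreover have "x\<^sup>2 \<le> x"
  proof -
    have "x * x \<le> x * 1" using True assms by (intro mult_left_mono) auto
    then show ?thesis by (simp add: power2_eq_square)
  qed
  moreover have "exp x \<ge> 1" using True by simp
  ultimately show ?thesis using True by simp
next
  case False
  have a: "1 + x \<le> exp x" by (rule exp_ge_add_one_self)
  have b: "exp x \<le> 1" using False by simp
  then have "\<bar>exp x - 1\<bar> = 1 - exp x" by simp
  then show ?thesis using a False by linarith
qed

lemma g_to_0:
  fixes \<gamma> :: "nat \<Rightarrow> real"
  assumes gsq: "summable (\<lambda>k. (\<gamma> (k + 1))\<^sup>2)"
  shows "\<gamma> \<longlonglongrightarrow> 0"
proof -
  have "(\<lambda>k. (\<gamma> (k + 1))\<^sup>2) \<longlonglongrightarrow> 0" by (rule summable_LIMSEQ_zero[OF gsq])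
  then have "(\<lambda>k. sqrt ((\<gamma> (k + 1))\<^sup>2)) \<longlonglongrightarrow> sqrt 0" by (rule tendsto_real_sqrt)
  then have "(\<lambda>k. \<bar>\<gamma> (Suc k)\<bar>) \<longlonglongrightarrow> 0" by simp
  then have "(\<lambda>k. \<gamma> (Suc k)) \<longlonglongrightarrow> 0" by (simp add: tendsto_rabs_zero_iff)
  then show ?thesis by (simp add: filterlim_sequentially_Suc)
qed

lemma ratio_facts:
  fixes \<gamma> :: "nat \<Rightarrow> real"
  assumes gpos: "\<forall>n\<ge>1. \<gamma> n > 0" and n: "n \<ge> 1"
  shows "(\<gamma> (n+1) - \<gamma> n) / \<gamma> n = exp (- ln (\<gamma> (Suc n - 1) / \<gamma> (Suc n))) - 1"
    and "(\<gamma> n - \<gamma> (n+1)) / \<gamma> (n+1) = exp (ln (\<gamma> (Suc n - 1) / \<gamma> (Suc n))) - 1"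
proof -
  have g1: "\<gamma> n > 0" "\<gamma> (Suc n) > 0" using gpos n by auto
  have e1: "exp (ln (\<gamma> (Suc n - 1) / \<gamma> (Suc n))) = \<gamma> n / \<gamma> (Suc n)" using g1 by simp
  have e2: "exp (- ln (\<gamma> (Suc n - 1) / \<gamma> (Suc n))) = \<gamma> (Suc n) / \<gamma> n" using g1 by (simp add: exp_minus)
  show "(\<gamma> (n+1) - \<gamma> n) / \<gamma> n = exp (- ln (\<gamma> (Suc n - 1) / \<gamma> (Suc n))) - 1"
    unfolding e2 using g1 by (simp add: field_simps)
  show "(\<gamma> n - \<gamma> (n+1)) / \<gamma> (n+1) = exp (ln (\<gamma> (Suc n - 1) / \<gamma> (Suc n))) - 1"
    unfolding e1 using g1 by (simp add: field_simps)
qed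

lemma d_lim:
  fixes \<gamma> :: "nat \<Rightarrow> real"
  assumes gpos: "\<forall>n\<ge>1. \<gamma> n > 0" and l0: "(\<lambda>k. ln (\<gamma> (k - 1) / \<gamma> k)) \<longlonglongrightarrow> 0"
  shows "(\<lambda>n. (\<gamma> (n+1) - \<gamma> n) / \<gamma> n) \<longlonglongrightarrow> 0"
proof -
  have "(\<lambda>n. ln (\<gamma> (Suc n - 1) / \<gamma> (Suc n))) \<longlonglongrightarrow> 0" using LIMSEQ_Suc[OF l0] .
  then have "(\<lambda>n. exp (- ln (\<gamma> (Suc n - 1) / \<gamma> (Suc n))) - 1) \<longlonglongrightarrow> exp (- 0) - 1"
    by (intro tendsto_intros)
  then have lim: "(\<lambda>n. exp (- ln (\<gamma> (Suc n - 1) / \<gamma> (Suc n))) - 1) \<longlonglongrightarrow> 0" by simp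
  have "eventually (\<lambda>n. exp (- ln (\<gamma> (Suc n - 1) / \<gamma> (Suc n))) - 1 = (\<gamma> (n+1) - \<gamma> n) / \<gamma> n) sequentially"
    using eventually_ge_at_top[of 1] by eventually_elim (use ratio_facts(1)[OF gpos] in auto)
  from Lim_transform_eventually[OF lim this] show ?thesis .
qed

lemma a_lim:
  fixes \<gamma> :: "nat \<Rightarrow> real"
  assumes gpos: "\<forall>n\<ge>1. \<gamma> n > 0" and g0: "\<gamma> \<longlonglongrightarrow> 0" and lo: "(\<lambda>k. ln (\<gamma> (k - 1) / \<gamma> k)) \<in> o(\<gamma>)"
  shows "(\<lambda>n. ((\<gamma> n - \<gamma> (n+1)) / \<gamma> (n+1)) / \<gamma> n) \<longlonglongrightarrow> 0"
proof -
  define l where "l k = ln (\<gamma> (k - 1) / \<gamma> k)" for k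
  have lg: "(\<lambda>k. l k / \<gamma> k) \<longlonglongrightarrow> 0" using smalloD_tendsto[OF lo] unfolding l_def .
  have l0: "l \<longlonglongrightarrow> 0"
  proof -
    have "(\<lambda>k. l k / \<gamma> k * \<gamma> k) \<longlonglongrightarrow> 0 * 0" by (rule tendsto_mult[OF lg g0])
    moreover have "eventually (\<lambda>k. l k / \<gamma> k * \<gamma> k = l k) sequentially"
      using eventually_ge_at_top[of 1] by eventually_elim (use gpos in auto)
    ultimately show ?thesis using Lim_transform_eventually by fastforce
  qed
  have lS: "(\<lambda>n. \<bar>l (Suc n) / \<gamma> (Suc n)\<bar>) \<longlonglongrightarrow> 0" using tendsto_rabs[OF LIMSEQ_Suc[OF lg]] by simp
  have rS: "(\<lambda>n. exp (- l (Suc n))) \<longlonglongrightarrow> exp (- 0)" using LIMSEQ_Suc[OF l0] by (intro tendsto_intros)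
  have bound: "(\<lambda>n. 2 * \<bar>l (Suc n) / \<gamma> (Suc n)\<bar> * exp (- l (Suc n))) \<longlonglongrightarrow> 2 * 0 * exp (- 0)"
    by (intro tendsto_mult tendsto_const lS rS)
  show ?thesis
  proof (rule Lim_null_comparison)
    show "(\<lambda>n. 2 * \<bar>l (Suc n) / \<gamma> (Suc n)\<bar> * exp (- l (Suc n))) \<longlonglongrightarrow> 0" using bound by simp
    have ev1: "eventually (\<lambda>n. \<bar>l (Suc n)\<bar> \<le> 1) sequentially"
    proof -
      have "eventually (\<lambda>n. norm (l (Suc n)) < 1) sequentially"
        using LIMSEQ_Suc[OF l0] by (rule order_tendstoD(2)[OF tendsto_norm, of _ 0, simplified]) simp
      then show ?thesis by (rule eventually_mono) simp
    qed
    show "\<forall>\<^sub>F n in sequentially. norm (((\<gamma> n - \<gamma> (n+1)) / \<gamma> (n+1)) / \<gamma> n) \<le> 2 * \<bar>l (Suc n) / \<gamma> (Suc n)\<bar> * exp (- l (Suc n))"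
      using eventually_conj[OF ev1 eventually_ge_at_top[of 1]]
    proof eventually_elim
      case (elim n)
      have g1: "\<gamma> n > 0" "\<gamma> (Suc n) > 0" using gpos elim by auto
      have e2: "exp (- l (Suc n)) = \<gamma> (Suc n) / \<gamma> n" unfolding l_def using g1 by (simp add: exp_minus)
      have "norm (((\<gamma> n - \<gamma> (n+1)) / \<gamma> (n+1)) / \<gamma> n) = \<bar>exp (l (Suc n)) - 1\<bar> / \<gamma> n"
        using ratio_facts(2)[OF gpos, of n] elim g1 unfolding l_def by simp
      also have "\<dots> \<le> 2 * \<bar>l (Suc n)\<bar> / \<gamma> n"
        using exp_sub_one_bound[of "l (Suc n)"] elim g1 by (simp add: divide_right_mono)
      also have "\<dots> = 2 * \<bar>l (Suc n) / \<gamma> (Suc n)\<bar> * exp (- l (Suc n))"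
        unfolding e2 using g1 by (simp add: abs_div field_simps)
      finally show ?case .
    qed
  qed
qed

lemma partA:
  fixes A Us :: "real^'d^'d" and \<gamma> :: "nat \<Rightarrow> real" and v :: "nat \<Rightarrow> real^'d^'d"
  assumes eig: "\<forall>\<mu>. is_eigenvalue A \<mu> \<longrightarrow> Re \<mu> < 0" and Us: "pos_def Us"
    and gpos: "\<forall>n\<ge>1. \<gamma> n > 0" and gdiv: "\<not> summable (\<lambda>k. \<gamma> (k + 1))"
    and gsq: "summable (\<lambda>k. (\<gamma> (k + 1))\<^sup>2)"
    and lo: "(\<lambda>k. ln (\<gamma> (k - 1) / \<gamma> k)) \<in> o(\<gamma>)"
    and rec: "\<forall>n\<ge>1. v (n + 1) = v n + \<gamma> n *\<^sub>R (Us + A ** v n + v n ** transpose A)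
                + ((\<gamma> n - \<gamma> (n + 1)) / \<gamma> (n + 1)) *\<^sub>R v n
                + (\<gamma> (n + 1) - \<gamma> n) *\<^sub>R Us
                + (\<gamma> n * \<gamma> (n + 1)) *\<^sub>R (A ** v n ** transpose A)"
  shows "\<exists>V. pos_def V \<and> Us + A ** V + V ** transpose A = 0 \<and>
           (\<forall>W. pos_def W \<and> Us + A ** W + W ** transpose A = 0 \<longrightarrow> W = V) \<and> v \<longlonglongrightarrow> V"
proof -
  have g0: "\<gamma> \<longlonglongrightarrow> 0" by (rule g_to_0[OF gsq])
  have l0: "(\<lambda>k. ln (\<gamma> (k - 1) / \<gamma> k)) \<longlonglongrightarrow> 0"
  proof -
    have lg: "(\<lambda>k. ln (\<gamma> (k - 1) / \<gamma> k) / \<gamma> k) \<longlonglongrightarrow> 0" using smalloD_tendsto[OF lo] .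
    have "(\<lambda>k. ln (\<gamma> (k - 1) / \<gamma> k) / \<gamma> k * \<gamma> k) \<longlonglongrightarrow> 0 * 0" by (rule tendsto_mult[OF lg g0])
    moreover have "eventually (\<lambda>k. ln (\<gamma> (k - 1) / \<gamma> k) / \<gamma> k * \<gamma> k = ln (\<gamma> (k - 1) / \<gamma> k)) sequentially"
      using eventually_ge_at_top[of 1] by eventually_elim (use gpos in auto)
    ultimately show ?thesis using Lim_transform_eventually by fastforce
  qed
  have rec': "\<forall>n\<ge>1. v (n+1) = v n + \<gamma> n *\<^sub>R (Us + (A ** v n + v n ** transpose A + 0 *\<^sub>R v n))
               + ((\<gamma> n - \<gamma> (n + 1)) / \<gamma> (n + 1)) *\<^sub>R v n + (\<gamma> (n + 1) - \<gamma> n) *\<^sub>R Us + (\<gamma> n * \<gamma> (n+1)) *\<^sub>R (A ** v n ** transpose A)"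
    using rec by (simp add: add.assoc)
  have eig': "\<forall>\<mu>. is_eigenvalue A \<mu> \<longrightarrow> Re \<mu> < - (0/2)" using eig by simp
  from CORE[OF eig' Us gpos gdiv g0 a_lim[OF gpos g0 lo] d_lim[OF gpos l0] rec']
  show ?thesis by (simp add: add.assoc)
qed

lemma partB:
  fixes A Us :: "real^'d^'d" and \<gamma> :: "nat \<Rightarrow> real" and v :: "nat \<Rightarrow> real^'d^'d" and L \<gamma>s :: real
  assumes eig: "\<forall>\<mu>. is_eigenvalue A \<mu> \<longrightarrow> Re \<mu> \<le> - L" and Lpos: "L > 0" and Us: "pos_def Us"
    and gpos: "\<forall>n\<ge>1. \<gamma> n > 0" and gdiv: "\<not> summable (\<lambda>k. \<gamma> (k + 1))"
    and gsq: "summable (\<lambda>k. (\<gamma> (k + 1))\<^sup>2)"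
    and gs: "\<gamma>s > 1 / (2 * L)"
    and le: "(\<lambda>k. ln (\<gamma> (k - 1) / \<gamma> k)) \<sim>[at_top] (\<lambda>k. \<gamma> k / \<gamma>s)"
    and rec: "\<forall>n\<ge>1. v (n + 1) = v n + \<gamma> n *\<^sub>R (Us + A ** v n + v n ** transpose A + (1 / \<gamma>s) *\<^sub>R v n)
                + (\<gamma> (n + 1) - \<gamma> n) *\<^sub>R Us
                + (\<gamma> n * \<gamma> (n + 1)) *\<^sub>R (A ** v n ** transpose A)"
  shows "\<exists>V. pos_def V \<and> Us + A ** V + V ** transpose A + (1 / \<gamma>s) *\<^sub>R V = 0 \<and>
           (\<forall>W. pos_def W \<and> Us + A ** W + W ** transpose A + (1 / \<gamma>s) *\<^sub>R W = 0 \<longrightarrow> W = V) \<and> v \<longlonglongrightarrow> V"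
proof -
  have g0: "\<gamma> \<longlonglongrightarrow> 0" by (rule g_to_0[OF gsq])
  have l0: "(\<lambda>k. ln (\<gamma> (k - 1) / \<gamma> k)) \<longlonglongrightarrow> 0"
  proof -
    have "(\<lambda>k. \<gamma> k / \<gamma>s) \<longlonglongrightarrow> 0" by (rule tendsto_divide_zero[OF g0])
    then show ?thesis using asymp_equiv_tendsto_transfer[OF asymp_equiv_sym[THEN iffD1, OF le]] by blast
  qed
  have gs0: "\<gamma>s > 0" using gs Lpos by (smt (verit) divide_pos_pos)
  have cL: "1 / \<gamma>s / 2 < L"
  proof -
    have "1 < 2 * L * \<gamma>s" using gs Lpos by (simp add: field_simps)
    then show ?thesis using gs0 by (simp add: field_simps)
  qed
  have eig': "\<forall>\<mu>. is_eigenvalue A \<mu> \<longrightarrow> Re \<mu> < - ((1 / \<gamma>s)/2)" using eig cL by force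
  have rec': "\<forall>n\<ge>1. v (n+1) = v n + \<gamma> n *\<^sub>R (Us + (A ** v n + v n ** transpose A + (1 / \<gamma>s) *\<^sub>R v n))
               + (\<lambda>n. 0) n *\<^sub>R v n + (\<gamma> (n + 1) - \<gamma> n) *\<^sub>R Us + (\<gamma> n * \<gamma> (n+1)) *\<^sub>R (A ** v n ** transpose A)"
    using rec by (simp add: add.assoc)
  have a0: "(\<lambda>n. (\<lambda>n. 0::real) n / \<gamma> n) \<longlonglongrightarrow> 0" by simp
  from CORE[OF eig' Us gpos gdiv g0 a0 d_lim[OF gpos l0] rec']
  show ?thesis by (simp add: add.assoc)
qed

theorem lemma8:
  fixes \<Theta> :: "(real^'d) set" and h :: "real^'d \<Rightarrow> real^'d" and \<theta>s :: "real^'d"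
    and J :: "real^'d \<Rightarrow> real^'d^'d" and L :: real and Us :: "real^'d^'d"
    and \<gamma> :: "nat \<Rightarrow> real" and v :: "nat \<Rightarrow> real^'d^'d"
  assumes meas: "h \<in> borel_measurable (restrict_space borel \<Theta>)"
    and theta_in: "\<theta>s \<in> \<Theta>"
    and C2: "\<exists>U. open U \<and> \<theta>s \<in> U \<and> U \<subseteq> \<Theta> \<and> C2_with_jacobian U h J"
    and hurw: "hurwitz (J \<theta>s)"
    and Lpos: "L > 0"
    and Lmax: "(\<exists>\<mu>. is_eigenvalue (J \<theta>s) \<mu> \<and> Re \<mu> = - L) \<and>
               (\<forall>\<mu>. is_eigenvalue (J \<theta>s) \<mu> \<longrightarrow> Re \<mu> \<le> - L)"
    and Us_pd: "pos_def Us"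
    and gpos: "\<forall>n\<ge>1. \<gamma> n > 0"
    and gdiv: "\<not> summable (\<lambda>k. \<gamma> (k + 1))"
    and gsq: "summable (\<lambda>k. (\<gamma> (k + 1))\<^sup>2)"
  shows
   "(let A = J \<theta>s; f = (\<lambda>w. Us + A ** w + w ** transpose A) in
      ((\<lambda>k. ln (\<gamma> (k - 1) / \<gamma> k)) \<in> o(\<gamma>) \<and>
       (\<forall>n\<ge>1. v (n + 1) = v n + \<gamma> n *\<^sub>R f (v n)
                + ((\<gamma> n - \<gamma> (n + 1)) / \<gamma> (n + 1)) *\<^sub>R v n
                + (\<gamma> (n + 1) - \<gamma> n) *\<^sub>R Us
                + (\<gamma> n * \<gamma> (n + 1)) *\<^sub>R (A ** v n ** transpose A))
       \<longrightarrow> (\<exists>V. pos_def V \<and> f V = 0 \<and> (\<forall>W. pos_def W \<and> f W = 0 \<longrightarrow> W = V)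
              \<and> (\<lambda>n. v n) \<longlonglongrightarrow> V)))
    \<and>
    (\<forall>\<gamma>s::real. let A = J \<theta>s; f = (\<lambda>w. Us + A ** w + w ** transpose A + (1 / \<gamma>s) *\<^sub>R w) in
      (\<gamma>s > 1 / (2 * L) \<and>
       (\<lambda>k. ln (\<gamma> (k - 1) / \<gamma> k)) \<sim>[at_top] (\<lambda>k. \<gamma> k / \<gamma>s) \<and>
       (\<forall>n\<ge>1. v (n + 1) = v n + \<gamma> n *\<^sub>R f (v n)
                + (\<gamma> (n + 1) - \<gamma> n) *\<^sub>R Us
                + (\<gamma> n * \<gamma> (n + 1)) *\<^sub>R (A ** v n ** transpose A))
       \<longrightarrow> (\<exists>V. pos_def V \<and> f V = 0 \<and> (\<forall>W. pos_def W \<and> f W = 0 \<longrightarrow> W = V)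
              \<and> (\<lambda>n. v n) \<longlonglongrightarrow> V)))"
proof -
  obtain U where U: "open U" "\<theta>s \<in> U" "U \<subseteq> \<Theta>" "C2_with_jacobian U h J" using C2 by blast
  have eigA: "\<forall>\<mu>. is_eigenvalue (J \<theta>s) \<mu> \<longrightarrow> Re \<mu> < 0" using hurw unfolding hurwitz_def by blast
  have eigL: "\<forall>\<mu>. is_eigenvalue (J \<theta>s) \<mu> \<longrightarrow> Re \<mu> \<le> - L" using Lmax by blast
  show ?thesis
    unfolding Let_def
  proof (intro conjI allI impI)
    assume H: "(\<lambda>k. ln (\<gamma> (k - 1) / \<gamma> k)) \<in> o(\<gamma>) \<and>
       (\<forall>n\<ge>1. v (n + 1) = v n + \<gamma> n *\<^sub>R (Us + J \<theta>s ** v n + v n ** transpose (J \<theta>s))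
                + ((\<gamma> n - \<gamma> (n + 1)) / \<gamma> (n + 1)) *\<^sub>R v n
                + (\<gamma> (n + 1) - \<gamma> n) *\<^sub>R Us
                + (\<gamma> n * \<gamma> (n + 1)) *\<^sub>R (J \<theta>s ** v n ** transpose (J \<theta>s)))"
    from partA[OF eigA Us_pd gpos gdiv gsq H[THEN conjunct1] H[THEN conjunct2]]
    show "\<exists>V. pos_def V \<and> Us + J \<theta>s ** V + V ** transpose (J \<theta>s) = 0 \<and>
          (\<forall>W. pos_def W \<and> Us + J \<theta>s ** W + W ** transpose (J \<theta>s) = 0 \<longrightarrow> W = V) \<and> v \<longlonglongrightarrow> V" .
  next
    fix \<gamma>s :: real
    assume H: "1 / (2 * L) < \<gamma>s \<and>
       (\<lambda>k. ln (\<gamma> (k - 1) / \<gamma> k)) \<sim>[at_top] (\<lambda>k. \<gamma> k / \<gamma>s) \<and>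
       (\<forall>n\<ge>1. v (n + 1) = v n + \<gamma> n *\<^sub>R (Us + J \<theta>s ** v n + v n ** transpose (J \<theta>s) + (1 / \<gamma>s) *\<^sub>R v n)
                + (\<gamma> (n + 1) - \<gamma> n) *\<^sub>R Us
                + (\<gamma> n * \<gamma> (n + 1)) *\<^sub>R (J \<theta>s ** v n ** transpose (J \<theta>s)))"
    from partB[OF eigL Lpos Us_pd gpos gdiv gsq H[THEN conjunct1] H[THEN conjunct2, THEN conjunct1] H[THEN conjunct2, THEN conjunct2]]
    show "\<exists>V. pos_def V \<and> Us + J \<theta>s ** V + V ** transpose (J \<theta>s) + (1 / \<gamma>s) *\<^sub>R V = 0 \<and>
          (\<forall>W. pos_def W \<and> Us + J \<theta>s ** W + W ** transpose (J \<theta>s) + (1 / \<gamma>s) *\<^sub>R W = 0 \<longrightarrow> W = V) \<and> v \<longlonglongrightarrow> V" .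
  qed
qed

end
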